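(* Let $S,T$ be left semi-braces whose associated maps $r_S$ and $r_T$ are solutions. Let $\sigma:T\to\mathrm{Aut}(S)$ be a homomorphism from $(T,\cdot)$ into the automorphism group of $(S,+,\cdot)$ (${}^ua=\sigma(u)(a)$), $\delta:S\to\mathrm{End}(T,+)$ a map ($u^a=\delta(a)(u)$), and $\mathfrak b:S\times S\to T$ a $\delta$-cocycle satisfying $\mathfrak b(a\,{}^ub,\lambda_a({}^uc))+(uv)^{\lambda_a({}^uc)}+u(\mathfrak b({}^{u^{-1}}(a^{-1}),c)+(u^{-1})^c)=u(\mathfrak b(b,c)+v^c)$ for all $a,b,c\in S$, $u,v\in T$; let $B$ be the asymmetric product $S\times T$ with $(a,u)+(b,v)=(a+b,\mathfrak b(a,b)+u^b+v)$, $(a,u)(b,v)=(a\,{}^ub,uv)$. If for all $a,b\in S$ and $u\in T$: (1) $(u^1)^a=u^a$; (2) $\mathfrak b(1,a)+u=1+u$; (3) $\mathfrak b(a,1+b)=\mathfrak b(a,b)$, (where $1$ denotes the identity of $(S,\cdot)$ when it appears in $S$ and the identity of $(T,\cdot)$ when it appears in $T$), then the map $r_B$ associated to $B$ is a solution.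
   Context: A left semi-brace is a triple $(S,+,\cdot)$ such that $(S,+)$ is a semigroup, $(S,\cdot)$ is a group with identity $1$, and $a(b+c)=ab+a(a^{-1}+c)$ for all $a,b,c$. Set $\lambda_a(b)=a(a^{-1}+b)$, $\rho_b(a)=(a^{-1}+b)^{-1}b$; the map associated to $X$ is $r_X(x,y)=(\lambda_x(y),\rho_y(x))$. A solution is a map $r:X\times X\to X\times X$ with $(r\times\mathrm{id})(\mathrm{id}\times r)(r\times\mathrm{id})=(\mathrm{id}\times r)(r\times\mathrm{id})(\mathrm{id}\times r)$. An automorphism of $(S,+,\cdot)$ is a bijection preserving both operations. A $\delta$-cocycle is a map $\mathfrak b:S\times S\to T$ with $\mathfrak b(a+b,c)+\mathfrak b(a,b)^c+(u^b)^c+v^c=\mathfrak b(a,b+c)+u^{b+c}+\mathfrak b(b,c)+v^c$ for all $a,b,c\in S$, $u,v\in T$. *)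

theory Defs
  imports Main
begin

definition group_ops :: "('a \<Rightarrow> 'a \<Rightarrow> 'a) \<Rightarrow> 'a \<Rightarrow> ('a \<Rightarrow> 'a) \<Rightarrow> bool" where
  "group_ops mult one iv \<longleftrightarrow>
     (\<forall>a b c. mult (mult a b) c = mult a (mult b c)) \<and>
     (\<forall>a. mult one a = a \<and> mult a one = a) \<and>
     (\<forall>a. mult (iv a) a = one \<and> mult a (iv a) = one)"

definition semigroup_op :: "('a \<Rightarrow> 'a \<Rightarrow> 'a) \<Rightarrow> bool" where
  "semigroup_op add \<longleftrightarrow> (\<forall>a b c. add (add a b) c = add a (add b c))"

definition left_semi_brace ::
  "('a \<Rightarrow> 'a \<Rightarrow> 'a) \<Rightarrow> ('a \<Rightarrow> 'a \<Rightarrow> 'a) \<Rightarrow> 'a \<Rightarrow> ('a \<Rightarrow> 'a) \<Rightarrow> bool" where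
  "left_semi_brace add mult one iv \<longleftrightarrow>
     semigroup_op add \<and> group_ops mult one iv \<and>
     (\<forall>a b c. mult a (add b c) = add (mult a b) (mult a (add (iv a) c)))"

definition lam :: "('a \<Rightarrow> 'a \<Rightarrow> 'a) \<Rightarrow> ('a \<Rightarrow> 'a \<Rightarrow> 'a) \<Rightarrow> ('a \<Rightarrow> 'a) \<Rightarrow> 'a \<Rightarrow> 'a \<Rightarrow> 'a" where
  "lam add mult iv a b = mult a (add (iv a) b)"

definition rho :: "('a \<Rightarrow> 'a \<Rightarrow> 'a) \<Rightarrow> ('a \<Rightarrow> 'a \<Rightarrow> 'a) \<Rightarrow> ('a \<Rightarrow> 'a) \<Rightarrow> 'a \<Rightarrow> 'a \<Rightarrow> 'a" where
  "rho add mult iv b a = mult (iv (add (iv a) b)) b"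

definition assoc_map :: "('a \<Rightarrow> 'a \<Rightarrow> 'a) \<Rightarrow> ('a \<Rightarrow> 'a \<Rightarrow> 'a) \<Rightarrow> ('a \<Rightarrow> 'a) \<Rightarrow> 'a \<times> 'a \<Rightarrow> 'a \<times> 'a" where
  "assoc_map add mult iv = (\<lambda>(x, y). (lam add mult iv x y, rho add mult iv y x))"

definition r12 :: "('a \<times> 'a \<Rightarrow> 'a \<times> 'a) \<Rightarrow> 'a \<times> 'a \<times> 'a \<Rightarrow> 'a \<times> 'a \<times> 'a" where
  "r12 r = (\<lambda>(x, y, z). (fst (r (x, y)), snd (r (x, y)), z))"

definition r23 :: "('a \<times> 'a \<Rightarrow> 'a \<times> 'a) \<Rightarrow> 'a \<times> 'a \<times> 'a \<Rightarrow> 'a \<times> 'a \<times> 'a" where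
  "r23 r = (\<lambda>(x, y, z). (x, fst (r (y, z)), snd (r (y, z))))"

definition is_solution :: "('a \<times> 'a \<Rightarrow> 'a \<times> 'a) \<Rightarrow> bool" where
  "is_solution r \<longleftrightarrow> r12 r \<circ> r23 r \<circ> r12 r = r23 r \<circ> r12 r \<circ> r23 r"

definition is_aut :: "('a \<Rightarrow> 'a \<Rightarrow> 'a) \<Rightarrow> ('a \<Rightarrow> 'a \<Rightarrow> 'a) \<Rightarrow> ('a \<Rightarrow> 'a) \<Rightarrow> bool" where
  "is_aut add mult f \<longleftrightarrow> bij f \<and> (\<forall>a b. f (add a b) = add (f a) (f b)) \<and>
     (\<forall>a b. f (mult a b) = mult (f a) (f b))"

text \<open>delta-cocycle; here delta a u stands for u^a.\<close>
definition delta_cocycle ::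
  "('a \<Rightarrow> 'a \<Rightarrow> 'a) \<Rightarrow> ('b \<Rightarrow> 'b \<Rightarrow> 'b) \<Rightarrow> ('a \<Rightarrow> 'b \<Rightarrow> 'b) \<Rightarrow> ('a \<Rightarrow> 'a \<Rightarrow> 'b) \<Rightarrow> bool" where
  "delta_cocycle addS addT delta bb \<longleftrightarrow>
     (\<forall>a b c u v.
        addT (addT (addT (bb (addS a b) c) (delta c (bb a b))) (delta c (delta b u))) (delta c v) =
        addT (addT (addT (bb a (addS b c)) (delta (addS b c) u)) (bb b c)) (delta c v))"

definition asym_add ::
  "('a \<Rightarrow> 'a \<Rightarrow> 'a) \<Rightarrow> ('b \<Rightarrow> 'b \<Rightarrow> 'b) \<Rightarrow> ('a \<Rightarrow> 'b \<Rightarrow> 'b) \<Rightarrow> ('a \<Rightarrow> 'a \<Rightarrow> 'b)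
   \<Rightarrow> 'a \<times> 'b \<Rightarrow> 'a \<times> 'b \<Rightarrow> 'a \<times> 'b" where
  "asym_add addS addT delta bb = (\<lambda>(a, u) (b, v). (addS a b, addT (addT (bb a b) (delta b u)) v))"

definition asym_mult ::
  "('a \<Rightarrow> 'a \<Rightarrow> 'a) \<Rightarrow> ('b \<Rightarrow> 'b \<Rightarrow> 'b) \<Rightarrow> ('b \<Rightarrow> 'a \<Rightarrow> 'a)
   \<Rightarrow> 'a \<times> 'b \<Rightarrow> 'a \<times> 'b \<Rightarrow> 'a \<times> 'b" where
  "asym_mult multS multT sigma = (\<lambda>(a, u) (b, v). (multS a (sigma u b), multT u v))"

definition asym_inv :: "('a \<Rightarrow> 'a) \<Rightarrow> ('b \<Rightarrow> 'b) \<Rightarrow> ('b \<Rightarrow> 'a \<Rightarrow> 'a) \<Rightarrow> 'a \<times> 'b \<Rightarrow> 'a \<times> 'b" where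
  "asym_inv invS invT sigma = (\<lambda>(a, u). (sigma (invT u) (invS a), invT u))"

end

theory Submission
  imports Defs
begin

lemma sol_K_core:
  fixes add mult lam rho :: "'a \<Rightarrow> 'a \<Rightarrow> 'a" and one :: 'a and iv :: "'a \<Rightarrow> 'a"
  assumes ax_a: "\<And>A B C. add (add A B) C = add A (add B C)"
  and ax_m: "\<And>A B C. mult (mult A B) C = mult A (mult B C)"
  and ax_o1: "\<And>A. mult one A = A" and ax_o2: "\<And>A. mult A one = A"
  and ax_i1: "\<And>A. mult (iv A) A = one" and ax_i2: "\<And>A. mult A (iv A) = one"
  and ax_sb: "\<And>A B C. mult A (add B C) = add (mult A B) (mult A (add (iv A) C))"
  and ax_ld: "\<And>A B. lam A B = mult A (add (iv A) B)"
  and ax_rd: "\<And>B A. rho B A = mult (iv (add (iv A) B)) B"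
  and ax_third: "\<And>X Y Z. rho Z (rho Y X) = rho (rho Z Y) (rho (lam Y Z) X)"
  shows "add x (mult b c) = add x (mult b (add one c))"
proof -
  have ax_c_0_20: "\<And>X1 X2. (mult X1 (mult (iv X1) X2)) = X2" by (metis ax_m ax_i2 ax_o1)
  have ax_c_0_23: "\<And>X1 X2 X3. (add X1 (mult X2 (add (iv X2) X3))) = (mult X2 (add (mult (iv X2) X1) X3))" by (metis ax_sb ax_c_0_20)
  have ax_c_0_26: "\<And>X1 X2 X3 X4. (add X1 (mult X2 (add (mult (iv X2) X3) X4))) = (mult X2 (add (mult (iv X2) (add X1 X3)) X4))" by (metis ax_a ax_c_0_23)
  have ax_c_0_28: "\<And>X1 X2. (mult (iv X1) (mult X1 X2)) = X2" by (metis ax_m ax_i1 ax_o1)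
  have ax_c_0_29: "\<And>X1 X2 X3. (mult X1 (add (mult (iv X1) (add X2 one)) X3)) = (mult X1 (add (mult (iv X1) X2) X3))" by (metis ax_c_0_26 ax_o2 ax_c_0_23)
  have ax_c_0_30: "\<And>X1. (iv (iv X1)) = X1" by (metis ax_c_0_28 ax_i1 ax_o2)
  have ax_c_0_31: "\<And>X1 X2 X3. (add (mult X1 (add X2 one)) X3) = (add (mult X1 X2) X3)" by (metis ax_c_0_20 ax_c_0_29 ax_c_0_30)
  have ax_c_0_32: "\<And>X1 X2. (add (mult (iv (add X1 one)) X1) X2) = (add one X2)" by (metis ax_c_0_31 ax_i1)
  have ax_c_0_33: "(iv one) = one" by (metis ax_o1 ax_i2)
  have ax_c_0_34: "\<And>X1 X2 X3 X4. (add (mult X1 (add X2 (add X3 one))) X4) = (add (mult X1 (add X2 X3)) X4)" by (metis ax_c_0_31 ax_a)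
  have ax_c_0_35: "\<And>X1. (add (iv (add one one)) X1) = (add one X1)" by (metis ax_c_0_32 ax_o2)
  have ax_c_0_36: "\<And>X1 X2. (add X1 (add one X2)) = (add X1 X2)" by (metis ax_sb ax_c_0_33 ax_o1)
  have ax_c_0_37: "\<And>X1 X2 X3. (mult X1 (add (mult (iv X1) (add X2 X1)) X3)) = (add X2 (mult X1 (add one X3)))" by (metis ax_c_0_26 ax_i2 ax_c_0_30)
  have ax_c_0_38: "\<And>X1 X2 X3. (add (mult X1 (add X2 (iv (add one one)))) X3) = (add (mult X1 X2) X3)" by (metis ax_c_0_34 ax_c_0_35 ax_c_0_36 ax_c_0_31)
  have ax_c_0_39: "\<And>X1 X2. (mult (iv (add one one)) (add (mult (add one one) X1) X2)) = (add X1 (mult (iv (add one one)) (add one X2)))" by (metis ax_c_0_37 ax_c_0_38 ax_c_0_30)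
  have ax_c_0_40: "\<And>X1. (add one (mult (iv (add one one)) (add one X1))) = (mult (iv (add one one)) (add one X1))" by (metis ax_c_0_39 ax_i2 ax_c_0_35)
  have ax_c_0_41: "\<And>X1 X2 X3. (mult X1 (add X2 (mult (iv X1) (add one X3)))) = (add (mult X1 (add X2 (iv X1))) X3)" by (metis ax_c_0_20 ax_c_0_37 ax_c_0_30)
  have ax_c_0_42: "(add one one) = one" by (metis ax_c_0_40 ax_i1)
  have ax_c_0_43: "\<And>X1 X2. (add (mult X1 (add X2 (iv X1))) one) = (mult X1 (add X2 (iv X1)))" by (metis ax_c_0_41 ax_c_0_42 ax_o2)
  have ax_c_0_44: "\<And>X1 X2. (add (mult (add one X1) (add X2 (iv (add one X1)))) X1) = (mult (add one X1) (add X2 one))" by (metis ax_c_0_41 ax_i1)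
  have ax_c_0_45: "\<And>X1 X2 X3 X4. (add (mult X1 (mult X2 (add X3 one))) X4) = (add (mult X1 (mult X2 X3)) X4)" by (metis ax_c_0_31)
  have ax_c_0_46: "\<And>X1 X2. (mult X1 (mult X2 (iv (mult X1 X2)))) = one" by (metis ax_i2 ax_m)
  have ax_c_0_47: "\<And>X1 X2. (add (mult X1 (mult (add one (iv X1)) X2)) one) = (mult X1 (mult (add one (iv X1)) (add X2 one)))" by (metis ax_c_0_43 ax_c_0_44 ax_c_0_45)
  have ax_c_0_48: "\<And>X1 X2. (mult X1 (iv (mult X2 X1))) = (iv X2)" by (metis ax_c_0_28 ax_c_0_46 ax_o2)
  have ax_c_0_49: "\<And>X1. (mult X1 (mult (add one (iv X1)) (add (iv (add one (iv X1))) one))) = (add X1 one)" by (metis ax_c_0_47 ax_i2 ax_o2)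
  have ax_c_0_50: "\<And>X1 X2. (mult (iv X1) (iv X2)) = (iv (mult X2 X1))" by (metis ax_c_0_28 ax_c_0_48)
  have ax_c_0_51: "\<And>X1. (mult (add one X1) (add (iv (add one X1)) one)) = (mult X1 (add (iv X1) one))" by (metis ax_c_0_20 ax_c_0_49 ax_c_0_30)
  have ax_c_0_52: "\<And>X1 X2. (add X1 (mult X1 (add (iv X1) X2))) = (mult X1 (add one X2))" by (metis ax_sb ax_o2)
  have ax_c_0_53: "\<And>X1 X2 X3. (mult (iv X1) (mult (iv X2) X3)) = (mult (iv (mult X2 X1)) X3)" by (metis ax_m ax_c_0_50)
  have ax_c_0_54: "\<And>X1. (mult (iv (add one X1)) (mult X1 (add (iv X1) one))) = (add (iv (add one X1)) one)" by (metis ax_c_0_28 ax_c_0_51)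
  have ax_c_0_55: "\<And>X1 X2 X3. (mult X1 (add X2 (mult (iv X1) (add X1 X3)))) = (add (mult X1 X2) X3)" by (metis ax_sb ax_c_0_52 ax_c_0_20 ax_c_0_36 ax_c_0_30)
  have ax_c_0_56: "\<And>X1. (mult (iv (mult X1 (add one (iv X1)))) (add X1 one)) = (add (iv (add one (iv X1))) one)" by (metis ax_c_0_53 ax_c_0_54 ax_c_0_30)
  have ax_c_0_57: "\<And>X1 X2. (mult (iv (mult X1 X2)) X1) = (iv X2)" by (metis ax_c_0_48 ax_c_0_30)
  have ax_c_0_61: "\<And>X1 X2 X3. (add X1 (mult (iv X2) (add X2 X3))) = (mult (iv X2) (add (mult X2 X1) X3))" by (metis ax_c_0_28 ax_c_0_55)
  have ax_c_0_62: "\<And>X1. (add (iv (add one (iv (add X1 one)))) one) = (iv (add one (iv (add X1 one))))" by (metis ax_c_0_56 ax_c_0_44 ax_c_0_42 ax_c_0_33 ax_o1 ax_c_0_57)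
  have ax_c_0_63: "\<And>X1 X2. (mult (add one X1) (add (mult (iv (add one X1)) X2) one)) = (mult X1 (add (mult (iv X1) X2) one))" by (metis ax_c_0_23 ax_c_0_51)
  have ax_c_0_67: "\<And>X1 X2. (mult (iv (add X1 one)) (add (mult (add X1 one) X2) one)) = (add X2 one)" by (metis ax_c_0_61 ax_c_0_62 ax_c_0_30 ax_i2 ax_c_0_63)
  have ax_c_0_68: "\<And>X1 X2 X3. (mult (iv (add (iv (mult (iv (add (iv X3) X2)) X2)) X1)) X1) = (mult (iv (add (iv (mult (iv (add (iv X3) (mult X2 (add (iv X2) X1)))) (mult X2 (add (iv X2) X1)))) (mult (iv (add (iv X2) X1)) X1))) (mult (iv (add (iv X2) X1)) X1))" by (metis ax_third ax_ld ax_rd)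
  have ax_c_0_69: "\<And>X1 X2. (iv (mult (iv X1) X2)) = (mult (iv X2) X1)" by (metis ax_c_0_57 ax_c_0_20)
  have ax_c_0_70: "\<And>X1 X2. (add (mult (add X1 one) X2) one) = (mult (add X1 one) (add X2 one))" by (metis ax_c_0_28 ax_c_0_67 ax_c_0_30)
  have ax_c_0_71: "\<And>X1 X2 X3 X4. (add (mult X1 (add X2 (mult (iv (add X3 one)) X3))) X4) = (add (mult X1 X2) X4)" by (metis ax_c_0_34 ax_c_0_32 ax_c_0_36 ax_c_0_31)
  have ax_c_0_72: "\<And>X1 X2 X3. (mult (iv (mult (add (iv X1) X2) (add (mult (iv (mult X1 (add (iv X1) X2))) (add (iv X3) (mult X1 (add (iv X1) X2)))) (mult (iv (add (iv X1) X2)) X2)))) X2) = (mult (iv (add (mult (iv X1) (add (iv X3) X1)) X2)) X2)" by (metis ax_c_0_68 ax_c_0_53 ax_c_0_69)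
  have ax_c_0_73: "\<And>X1 X2 X3. (mult (iv (mult X1 X2)) (mult X1 X3)) = (mult (iv X2) X3)" by (metis ax_m ax_c_0_57)
  have ax_c_0_74: "\<And>X1 X2 X3. (mult (iv X1) (add X2 (mult X1 (add one X3)))) = (add (mult (iv X1) (add X2 X1)) X3)" by (metis ax_c_0_28 ax_c_0_37)
  have ax_c_0_75: "\<And>X1 X2. (mult (add X1 one) (add (iv (mult X2 (add X1 one))) one)) = (add (iv X2) one)" by (metis ax_c_0_70 ax_c_0_48)
  have ax_c_0_76: "\<And>X1 X2. (add (mult X1 (iv (add one one))) X2) = (add X1 X2)" by (metis ax_c_0_31 ax_c_0_35 ax_o2)
  have ax_c_0_77: "\<And>X1 X2 X3. (add (mult (iv (add X1 (mult (iv (add X2 one)) X2))) X1) X3) = (add one X3)" by (metis ax_c_0_71 ax_i1)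
  have ax_c_0_78: "\<And>X1 X2. (iv (mult (add (iv X1) one) (add (iv (mult X2 (mult X1 (add (iv X1) one)))) (iv (add (iv X1) one))))) = (iv (add (mult (iv X1) (add (iv X2) X1)) one))" by (metis ax_o2 ax_c_0_72 ax_c_0_23 ax_c_0_50 ax_c_0_73 ax_c_0_31 ax_m)
  have ax_c_0_79: "\<And>X1 X2. (add (mult (iv X1) (add X2 X1)) one) = (mult (iv X1) (add X2 X1))" by (metis ax_c_0_74 ax_c_0_42 ax_o2)
  have ax_c_0_80: "\<And>X1 X2. (iv (add (iv (mult X1 (add X2 one))) one)) = (mult (iv (add (iv X1) one)) (add X2 one))" by (metis ax_c_0_57 ax_c_0_75)
  have ax_c_0_81: "\<And>X1 X2. (add (iv (add one (mult (iv (add X1 one)) X1))) X2) = (add one X2)" by (metis ax_c_0_76 ax_c_0_77 ax_c_0_42 ax_c_0_33)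
  have ax_c_0_82: "\<And>X1 X2. (iv (mult (add (iv X1) one) (add (iv (mult X2 (mult X1 (add (iv X1) one)))) (iv (add (iv X1) one))))) = (mult (iv (add (iv X2) X1)) X1)" by (metis ax_c_0_78 ax_c_0_79 ax_c_0_69)
  have ax_c_0_83: "\<And>X1 X2. (mult (iv (mult X1 (add (iv X1) one))) (add X2 X1)) = (iv (add (iv (add X2 X1)) one))" by (metis ax_c_0_80 ax_c_0_37 ax_c_0_42 ax_o2 ax_c_0_79 ax_c_0_53)
  have ax_c_0_84: "\<And>X1. (add one (mult (iv (add X1 one)) X1)) = (mult (iv (add X1 one)) X1)" by (metis ax_c_0_51 ax_c_0_81 ax_c_0_42 ax_o2 ax_c_0_69 ax_c_0_31 ax_i1)
  have ax_c_0_85: "\<And>X1. (iv (mult (add (iv X1) one) (add one (iv (add (iv X1) one))))) = (mult (iv (add one X1)) X1)" by (metis ax_c_0_82 ax_i1 ax_c_0_33 ax_c_0_30 ax_c_0_31 ax_i2)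
  have ax_c_0_86: "\<And>X1 X2. (mult (iv (add X1 X2)) (mult X2 (add (iv X2) one))) = (add (iv (add X1 X2)) one)" by (metis ax_c_0_69 ax_c_0_83 ax_c_0_30)
  have ax_c_0_87: "\<And>X1. (add (mult (add one (add X1 one)) (add one (iv (add one (add X1 one))))) X1) = (add one X1)" by (metis ax_c_0_74 ax_c_0_84 ax_a ax_c_0_30 ax_c_0_20)
  have ax_c_0_88: "\<And>X1. (iv (add one (iv (add (iv X1) one)))) = (add (iv (add one X1)) one)" by (metis ax_c_0_57 ax_c_0_85 ax_m ax_c_0_86)
  have ax_c_0_89: "\<And>X1 X2. (add (mult (add one (add X1 one)) (add one (iv (add one (add X1 one))))) (mult X1 (add one X2))) = (add one (mult X1 (add one X2)))" by (metis ax_c_0_37 ax_c_0_87)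
  have ax_c_0_90: "\<And>X1. (iv (add one (iv (add X1 one)))) = (add (iv (add one (iv X1))) one)" by (metis ax_c_0_88 ax_c_0_30)
  have ax_c_0_91: "\<And>X1. (mult (add one (add (iv (add one X1)) one)) (add one (iv (add one (add (iv (add one X1)) one))))) = one" by (metis ax_c_0_89 ax_i1 ax_c_0_43 ax_c_0_42)
  have ax_c_0_92: "\<And>X1 X2. (mult (iv (mult X1 (add X2 (iv X1)))) (add X1 one)) = (add (iv (add X2 (iv X1))) one)" by (metis ax_c_0_53 ax_c_0_86 ax_c_0_30)
  have ax_c_0_93: "\<And>X1 X2. (iv (add one (iv (add X1 (add X2 one))))) = (add (iv (add one (iv (add X1 X2)))) one)" by (metis ax_c_0_90 ax_a)
  have ax_c_0_94: "\<And>X1. (add one (iv (add one (add (iv (add one X1)) one)))) = (iv (add one (add (iv (add one X1)) one)))" by (metis ax_c_0_28 ax_c_0_91 ax_o2)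
  have ax_c_0_95: "\<And>X1 X2 X3. (mult (iv X1) (add (mult X1 (add X2 (iv X1))) X3)) = (add X2 (mult (iv X1) (add one X3)))" by (metis ax_c_0_37 ax_c_0_30)
  have ax_c_0_96: "\<And>X1 X2. (mult (add X1 one) (iv (add (iv (add X2 (iv X1))) one))) = (mult X1 (add X2 (iv X1)))" by (metis ax_c_0_48 ax_c_0_92 ax_c_0_30)
  have ax_c_0_97: "\<And>X1. (add (iv (add one (iv (add one (iv (add one X1)))))) one) = (add one (add (iv (add one X1)) one))" by (metis ax_c_0_93 ax_c_0_94 ax_c_0_30)
  have ax_c_0_98: "\<And>X1. (add one (mult (iv (add one (add X1 one))) (add one X1))) = (mult (iv (add one (add X1 one))) (add one X1))" by (metis ax_c_0_95 ax_c_0_87)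
  have ax_c_0_99: "\<And>X1 X2. (add (iv (mult X1 (add (iv X1) one))) X2) = (add one X2)" by (metis ax_c_0_32 ax_c_0_50)
  have ax_c_0_100: "\<And>X1. (mult (add one (iv (add one X1))) (add one (iv (add one (iv (add one X1)))))) = one" by (metis ax_c_0_96 ax_c_0_97 ax_a ax_i2)
  have ax_c_0_101: "\<And>X1 X2. (mult (iv (mult (add one X1) (add (mult (iv (add one X1)) (add (iv X2) X1)) (mult (iv (add one X1)) X1)))) X1) = (mult (iv (add (iv X2) X1)) X1)" by (metis ax_c_0_72 ax_c_0_33 ax_o1 ax_c_0_36 ax_a)
  have ax_c_0_102: "\<And>X1. (add (iv (add one (iv (add one (mult (iv (add one X1)) (add one (add X1 one))))))) one) = one" by (metis ax_c_0_97 ax_c_0_98 ax_c_0_69 ax_c_0_34 ax_i1 ax_c_0_42)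
  have ax_c_0_103: "\<And>X1 X2 X3. (add (iv (mult X1 (mult X2 (add (iv (mult X1 X2)) one)))) X3) = (add one X3)" by (metis ax_c_0_99 ax_m)
  have ax_c_0_104: "\<And>X1. (add one (iv (add one (iv (add one X1))))) = (iv (add one (iv (add one X1))))" by (metis ax_c_0_28 ax_c_0_100 ax_o2)
  have ax_c_0_105: "\<And>X1 X2 X3. (add (mult (iv (add X1 (add X2 one))) (add X1 X2)) X3) = (add one X3)" by (metis ax_c_0_32 ax_a)
  have ax_c_0_106: "\<And>X1. (add (iv (add X1 one)) one) = (iv (add X1 one))" by (metis ax_c_0_67 ax_i2 ax_c_0_42 ax_o2)
  have ax_c_0_107: "\<And>X1 X2 X3. (mult (add (iv X1) X2) (add (mult (iv (add (iv X1) X2)) (add (iv (mult X3 X1)) X2)) (mult (iv (add (iv X1) X2)) X2))) = (add (mult (iv X1) (add (iv X3) X1)) X2)" by (metis ax_c_0_48 ax_c_0_72 ax_c_0_69 ax_c_0_20 ax_c_0_30 ax_c_0_23 ax_c_0_50 ax_c_0_73)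
  have ax_c_0_108: "\<And>X1. (mult (iv (mult (add one X1) (add one (mult (iv (add one X1)) X1)))) X1) = (mult (iv (add one X1)) X1)" by (metis ax_c_0_101 ax_c_0_33 ax_i1)
  have ax_c_0_109: "\<And>X1 X2. (mult (add X1 X2) (add (iv (add X1 X2)) one)) = (mult X2 (add (iv X2) one))" by (metis ax_c_0_48 ax_c_0_83 ax_c_0_30)
  have ax_c_0_110: "\<And>X1 X2. (add one (add (iv (add one (iv (mult X1 (mult X2 (add (iv (mult X1 X2)) one)))))) one)) = one" by (metis ax_c_0_102 ax_c_0_103 ax_c_0_36 ax_c_0_42 ax_o2 ax_c_0_104 ax_c_0_30 ax_a)
  have ax_c_0_111: "\<And>X1. (iv (add (iv (add one X1)) one)) = (add one (iv (add (iv X1) one)))" by (metis ax_c_0_30 ax_c_0_88)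
  have ax_c_0_112: "\<And>X1 X2 X3 X4. (mult X1 (add (mult (iv X1) (add X2 (mult X1 X3))) X4)) = (add X2 (mult X1 (add X3 X4)))" by (metis ax_c_0_26 ax_c_0_20 ax_c_0_30)
  have ax_c_0_113: "\<And>X1 X2 X3. (add (mult (iv (mult (add X1 one) X2)) X1) X3) = (add (iv X2) X3)" by (metis ax_c_0_31 ax_c_0_57)
  have ax_c_0_114: "\<And>X1 X2. (add (iv (add one (mult (iv (add X1 X2)) (add X1 (add X2 one))))) one) = one" by (metis ax_c_0_90 ax_c_0_105 ax_c_0_33 ax_c_0_42 ax_c_0_69)
  have ax_c_0_115: "\<And>X1 X2. (add (mult (iv (add X1 X2)) X2) one) = (mult (iv (add X1 X2)) X2)" by (metis ax_c_0_106 ax_c_0_79 ax_c_0_69)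
  have ax_c_0_116: "\<And>X1 X2. (mult (add (iv X1) X2) (add one (mult (iv (add (iv X1) X2)) X2))) = (add (mult (iv X1) (add one X1)) X2)" by (metis ax_c_0_107 ax_o1 ax_i1 ax_c_0_33)
  have ax_c_0_117: "\<And>X1 X2. (add one (add (mult (iv (add one X1)) X1) X2)) = (add one X2)" by (metis ax_c_0_103 ax_c_0_108 ax_c_0_69 ax_c_0_79 ax_c_0_20 ax_c_0_57 ax_c_0_30 ax_a)
  have ax_c_0_118: "\<And>X1 X2. (add (iv (add one (iv (mult X1 (mult X2 (add (iv (mult X1 X2)) one)))))) one) = one" by (metis ax_c_0_109 ax_c_0_110 ax_c_0_33 ax_c_0_42 ax_o2 ax_c_0_111 ax_c_0_30 ax_c_0_45 ax_c_0_48 ax_i2)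
  have ax_c_0_119: "\<And>X1 X2 X3. (add (mult (iv (mult X1 (add (mult (iv X1) X2) one))) X2) X3) = (add one X3)" by (metis ax_c_0_32 ax_c_0_53)
  have ax_c_0_120: "\<And>X1 X2 X3 X4. (add (mult X1 (add X2 (mult (iv X1) X3))) X4) = (mult X1 (add X2 (mult (iv X1) (add X3 X4))))" by (metis ax_c_0_20 ax_c_0_112 ax_c_0_30)
  have ax_c_0_121: "\<And>X1 X2 X3. (add (iv (mult X1 (mult (add (iv X1) one) X2))) X3) = (add (iv X2) X3)" by (metis ax_c_0_113 ax_c_0_53 ax_m)
  have ax_c_0_122: "\<And>X1 X2. (add (iv (add one (mult (iv (add (mult X1 X2) one)) (mult X1 (add X2 one))))) one) = one" by (metis ax_c_0_114 ax_c_0_81 ax_c_0_84 ax_c_0_69 ax_c_0_61 ax_c_0_36 ax_m)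
  have ax_c_0_123: "\<And>X1 X2 X3 X4. (mult (iv (mult (add (iv X1) X2) (add (mult (iv (add (iv X1) X2)) (add (iv (mult X3 X1)) X2)) (mult (iv (add (iv X1) X2)) X2)))) (mult X2 X4)) = (mult (iv (add (mult (iv X1) (add (iv X3) X1)) X2)) (mult X2 X4))" by (metis ax_m ax_c_0_72 ax_c_0_23 ax_c_0_50 ax_c_0_73)
  have ax_c_0_124: "\<And>X1 X2 X3. (add (mult (iv (add X1 X2)) (mult X2 X3)) one) = (mult (iv (add X1 X2)) (mult X2 (add X3 one)))" by (metis ax_c_0_70 ax_c_0_115 ax_m)
  have ax_c_0_125: "\<And>X1 X2. (mult (add X1 X2) (add one (mult (iv (add X1 X2)) X2))) = (add (mult X1 (add one (iv X1))) X2)" by (metis ax_c_0_116 ax_c_0_30)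
  have ax_c_0_126: "\<And>X1. (add one (mult (iv (add one X1)) X1)) = one" by (metis ax_c_0_117 ax_c_0_115 ax_c_0_42)
  have ax_c_0_127: "\<And>X1 X2. (add (iv (add one (mult (iv (mult X1 (add (mult (iv X1) X2) one))) X2))) one) = one" by (metis ax_c_0_118 ax_c_0_73 ax_c_0_69 ax_m)
  have ax_c_0_128: "\<And>X1 X2 X3. (add (mult (iv (add X1 (iv (mult X2 (add (iv X2) one))))) X1) X3) = (add one X3)" by (metis ax_c_0_77 ax_c_0_99 ax_c_0_50 ax_m ax_c_0_42 ax_o2)
  have ax_c_0_129: "\<And>X1 X2 X3 X4. (add (mult (iv (add X1 (mult X2 (add X3 one)))) (add X1 (mult X2 X3))) X4) = (add one X4)" by (metis ax_c_0_119 ax_c_0_120 ax_c_0_30 ax_c_0_20)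
  have ax_c_0_130: "\<And>X1 X2. (add (iv (add one (iv (mult X1 (add (iv X1) one))))) X2) = (add one X2)" by (metis ax_c_0_81 ax_c_0_99 ax_c_0_50 ax_m ax_c_0_42 ax_o2)
  have ax_c_0_131: "\<And>X1 X2. (add (iv (add one (mult X1 (mult (add (iv X1) one) X2)))) one) = (add (iv (add one X2)) one)" by (metis ax_c_0_90 ax_c_0_121 ax_c_0_88 ax_c_0_30)
  have ax_c_0_132: "\<And>X1 X2. (add (iv (add one (mult (iv (mult X1 (add X2 one))) (add (mult X1 X2) one)))) one) = one" by (metis ax_c_0_122 ax_c_0_123 ax_c_0_124 ax_c_0_69 ax_c_0_107 ax_m ax_c_0_20)
  have ax_c_0_133: "\<And>X1 X2 X3. (mult (add X1 X2) (add (mult (iv (add X1 X2)) X3) one)) = (mult X2 (add (mult (iv X2) X3) one))" by (metis ax_c_0_23 ax_c_0_109)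
  have ax_c_0_134: "\<And>X1 X2. (mult (iv (add X1 X2)) (add (mult X1 (add one (iv X1))) X2)) = (add one (mult (iv (add X1 X2)) X2))" by (metis ax_c_0_28 ax_c_0_125)
  have ax_c_0_135: "\<And>X1 X2. (add X1 (mult (iv (add one X2)) X2)) = (add X1 one)" by (metis ax_c_0_61 ax_c_0_126 ax_c_0_33 ax_o2 ax_o1)
  have ax_c_0_136: "\<And>X1 X2. (mult (iv (add X1 one)) (mult X1 (add X2 (iv X1)))) = (iv (add (iv (add X2 (iv X1))) one))" by (metis ax_c_0_80 ax_c_0_95 ax_c_0_42 ax_o2 ax_c_0_30 ax_c_0_43)
  have ax_c_0_137: "\<And>X1 X2. (add (iv (add X1 (add X2 one))) one) = (iv (add X1 (add X2 one)))" by (metis ax_c_0_106 ax_a)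
  have ax_c_0_138: "\<And>X1 X2. (add (iv (add one (mult (iv (add X1 (iv (mult X2 (add (iv X2) one))))) X1))) one) = one" by (metis ax_c_0_127 ax_c_0_128 ax_c_0_42 ax_o2)
  have ax_c_0_139: "\<And>X1 X2 X3. (add (mult (iv (add one (mult X1 (add one (add X2 one))))) (add one (mult X1 (add one X2)))) X3) = (add one X3)" by (metis ax_c_0_129 ax_c_0_89 ax_a)
  have ax_c_0_140: "\<And>X1. (add one (iv (mult X1 (add (iv X1) one)))) = (iv (mult X1 (add (iv X1) one)))" by (metis ax_c_0_51 ax_c_0_130 ax_c_0_42 ax_o2 ax_c_0_30 ax_c_0_31 ax_i2)
  have ax_c_0_141: "\<And>X1 X2 X3. (add (iv (add one (mult X1 (mult (add (iv X1) one) X2)))) X3) = (add (iv (add one X2)) X3)" by (metis ax_a ax_c_0_131 ax_c_0_36)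
  have ax_c_0_142: "\<And>X1 X2. (add (iv (add one (mult (iv (mult X1 (add (mult (iv X1) X2) one))) (add X2 one)))) one) = one" by (metis ax_c_0_132 ax_c_0_133 ax_a ax_c_0_42 ax_c_0_31 ax_c_0_20)
  have ax_c_0_143: "\<And>X1 X2. (add one (mult (iv (mult (add one X1) (add X2 one))) X1)) = (add one (iv (add X2 one)))" by (metis ax_c_0_134 ax_c_0_135 ax_c_0_43 ax_c_0_136 ax_c_0_111 ax_c_0_30 ax_c_0_53)
  have ax_c_0_144: "\<And>X1 X2. (add (mult (iv (add X1 (add X2 one))) X2) one) = (mult (iv (add X1 (add X2 one))) (add X2 one))" by (metis ax_c_0_31 ax_c_0_115)
  have ax_c_0_145: "\<And>X1 X2 X3. (add (iv (add X1 (mult (iv X2) (add X3 X2)))) one) = (iv (add X1 (mult (iv X2) (add X3 X2))))" by (metis ax_c_0_137 ax_c_0_79)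
  have ax_c_0_146: "\<And>X1 X2. (add (iv (add one (mult (iv X1) (mult (add X1 one) X2)))) one) = (add (iv (add one X2)) one)" by (metis ax_c_0_90 ax_c_0_113 ax_c_0_88 ax_c_0_69)
  have ax_c_0_147: "\<And>X1 X2. (add (iv (add one (mult (iv (add one (mult X1 (add one (add X2 one))))) (add one (mult X1 (add one X2)))))) one) = one" by (metis ax_c_0_138 ax_c_0_139 ax_c_0_140 ax_c_0_30 ax_m ax_c_0_141)
  have ax_c_0_148: "\<And>X1. (iv (add one (mult (iv (add X1 one)) (add one (add X1 one))))) = one" by (metis ax_c_0_142 ax_c_0_143 ax_c_0_144 ax_c_0_69 ax_c_0_145)
  have ax_c_0_149: "\<And>X1 X2. (add (iv (add one (mult (iv (add X1 one)) X2))) one) = (add (iv (add one (mult (iv X1) X2))) one)" by (metis ax_c_0_146 ax_c_0_20)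
  have ax_c_0_150: "\<And>X1 X2. (add one (iv (add (mult (iv (add one (mult X1 (add one X2)))) (add one (mult X1 (add one (add X2 one))))) one))) = one" by (metis ax_c_0_111 ax_c_0_147 ax_c_0_33 ax_c_0_69)
  have ax_c_0_151: "\<And>X1. (add one (mult (iv (add X1 one)) (add one (add X1 one)))) = one" by (metis ax_i2 ax_c_0_148 ax_o2)
  have ax_c_0_152: "\<And>X1 X2 X3. (add (iv (add one (mult (iv (add X1 one)) X2))) X3) = (add (iv (add one (mult (iv X1) X2))) X3)" by (metis ax_a ax_c_0_149 ax_c_0_36)
  have ax_c_0_153: "\<And>X1 X2. (iv (mult X1 (iv X2))) = (mult X2 (iv X1))" by (metis ax_c_0_20 ax_c_0_48)
  have ax_c_0_154: "\<And>X1. (add one (mult (iv X1) (add one X1))) = one" by (metis ax_c_0_150 ax_c_0_151 ax_o2 ax_c_0_152 ax_c_0_145 ax_c_0_30 ax_c_0_36)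
  have ax_c_0_155: "\<And>X1 X2. (add one (mult (add X1 one) (mult (iv (add one X2)) X2))) = (add one (add X1 one))" by (metis ax_c_0_143 ax_c_0_106 ax_c_0_153 ax_m ax_c_0_30)
  have ax_c_0_156: "\<And>X1 X2. (add X1 (mult (iv X2) (add one X2))) = (add X1 one)" by (metis ax_c_0_61 ax_c_0_154 ax_c_0_33 ax_o2 ax_o1)
  have ax_c_0_157: "\<And>X1 X2. (add one (mult (add X1 one) (mult (iv X2) (add one X2)))) = (add one (add X1 one))" by (metis ax_c_0_155 ax_c_0_156 ax_c_0_42 ax_c_0_33 ax_o1)
  have ax_c_0_158: "\<And>X1 X2 X3. (mult X1 (mult (iv (mult X2 X1)) X3)) = (mult (iv X2) X3)" by (metis ax_m ax_c_0_48)
  have ax_c_0_159: "\<And>X1 X2 X3 X4. (add (mult X1 X2) (add (mult X1 (add (iv X1) X3)) X4)) = (add (mult X1 (add X2 X3)) X4)" by (metis ax_a ax_sb)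
  have ax_c_0_160: "\<And>X1 X2. (add one (mult (iv X1) (add one (mult X1 (add X2 one))))) = (add one (add X2 one))" by (metis ax_c_0_157 ax_c_0_158)
  have ax_c_0_161: "\<And>X1 X2 X3 X4. (add X1 (mult (iv X2) (add (mult X2 X3) X4))) = (mult (iv X2) (add (mult X2 (add X1 X3)) X4))" by (metis ax_a ax_c_0_61)
  have ax_c_0_162: "\<And>X1 X2 X3 X4. (add X1 (add (mult (iv X2) (add X2 X3)) X4)) = (add (mult (iv X2) (add (mult X2 X1) X3)) X4)" by (metis ax_c_0_159 ax_c_0_28 ax_c_0_30)
  have ax_c_0_163: "\<And>X1 X2. (add one (add (mult X1 (add one X2)) one)) = (add one (add (mult X1 X2) one))" by (metis ax_c_0_160 ax_c_0_161 ax_c_0_30 ax_c_0_20)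
  have ax_c_0_164: "\<And>X1 X2 X3 X4. (mult (iv X1) (add X2 (add X3 (mult X1 (add one X4))))) = (add (mult (iv X1) (add X2 (add X3 X1))) X4)" by (metis ax_c_0_74 ax_a)
  have ax_c_0_165: "\<And>X1 X2 X3. (add (mult X1 (add X2 (iv X1))) (mult X1 (add one X3))) = (mult X1 (add X2 (add (mult (iv X1) (add one X1)) X3)))" by (metis ax_c_0_37 ax_a ax_c_0_30)
  have ax_c_0_166: "\<And>X1 X2 X3 X4. (add X1 (add (mult X2 (add one X3)) X4)) = (add X1 (add (mult X2 X3) X4))" by (metis ax_c_0_162 ax_c_0_163 ax_c_0_33 ax_o1 ax_a ax_c_0_36)
  have ax_c_0_167: "\<And>X1 X2 X3. (add (mult X1 (add X2 (add X3 (iv X1)))) X1) = (mult X1 (add X2 (add X3 one)))" by (metis ax_c_0_164 ax_c_0_156 ax_c_0_30)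
  have ax_c_0_168: "\<And>X1 X2. (add (mult X1 (add X2 (iv X1))) X1) = (mult X1 (add X2 one))" by (metis ax_c_0_165 ax_c_0_156 ax_c_0_42 ax_o2 ax_c_0_79)
  have ax_c_0_169: "\<And>X1 X2 X3. (add X1 (mult X2 (add one (add X3 one)))) = (add X1 (mult X2 (add X3 one)))" by (metis ax_c_0_166 ax_c_0_167 ax_c_0_168)
  have ax_c_0_170: "\<And>X1 X2 X3. (add X1 (add (mult (iv (add one X2)) X2) X3)) = (add X1 X3)" by (metis ax_c_0_61 ax_c_0_117 ax_c_0_33 ax_o1 ax_c_0_36)
  have ax_c_0_172: "\<And>X1 X2 X3. (add X1 (mult X2 (mult (iv (add one X3)) X3))) = (add X1 X2)" by (metis ax_c_0_169 ax_c_0_170 ax_c_0_42 ax_o2 ax_c_0_115)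
  have ax_c_0_174: "\<And>X1 X2 X3. (add X1 (mult (iv X2) (add one X3))) = (add X1 (mult (iv X2) X3))" by (metis ax_c_0_172 ax_c_0_73 ax_c_0_69)
  have ax_c_0_176: "\<And>X1 X2 X3. (add X1 (mult X2 (add one X3))) = (add X1 (mult X2 X3))" by (metis ax_c_0_174 ax_c_0_30)
  show ?thesis by (metis ax_c_0_176)
qed

lemma K_first:
  fixes add mult lam rho :: "'a \<Rightarrow> 'a \<Rightarrow> 'a" and one :: 'a and iv :: "'a \<Rightarrow> 'a"
  assumes k1_a: "\<And>A B C. add (add A B) C = add A (add B C)"
  and k1_m: "\<And>A B C. mult (mult A B) C = mult A (mult B C)"
  and k1_o1: "\<And>A. mult one A = A" and k1_o2: "\<And>A. mult A one = A"
  and k1_i1: "\<And>A. mult (iv A) A = one" and k1_i2: "\<And>A. mult A (iv A) = one"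
  and k1_sb: "\<And>A B C. mult A (add B C) = add (mult A B) (mult A (add (iv A) C))"
  and k1_ld: "\<And>A B. lam A B = mult A (add (iv A) B)"
  and k1_rd: "\<And>B A. rho B A = mult (iv (add (iv A) B)) B"
  and k1_k: "\<And>X B C. add X (mult B C) = add X (mult B (add one C))"
  shows "lam (lam esk1_0 esk2_0) (lam (rho esk2_0 esk1_0) esk3_0) = lam esk1_0 (lam esk2_0 esk3_0)"
proof (rule ccontr)
  assume k1_c_0_19: "(lam (lam esk1_0 esk2_0) (lam (rho esk2_0 esk1_0) esk3_0)) \<noteq> (lam esk1_0 (lam esk2_0 esk3_0))"
  have k1_c_0_22: "\<And>X1 X2. (mult (iv X1) (mult X1 X2)) = X2" by (metis k1_m k1_i1 k1_o1)
  have k1_c_0_23: "\<And>X1 X2. (mult X1 (mult X2 (iv (mult X1 X2)))) = one" by (metis k1_i2 k1_m)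
  have k1_c_0_28: "\<And>X1 X2. (mult X1 (iv (mult X2 X1))) = (iv X2)" by (metis k1_c_0_22 k1_c_0_23 k1_o2)
  have k1_c_0_29: "\<And>X1. (iv (iv X1)) = X1" by (metis k1_c_0_22 k1_i1 k1_o2)
  have k1_c_0_30: "(mult (mult esk1_0 (add (iv esk1_0) esk2_0)) (add (iv (mult esk1_0 (add (iv esk1_0) esk2_0))) (mult (mult (iv (add (iv esk1_0) esk2_0)) esk2_0) (add (iv (mult (iv (add (iv esk1_0) esk2_0)) esk2_0)) esk3_0)))) \<noteq> (mult esk1_0 (add (iv esk1_0) (mult esk2_0 (add (iv esk2_0) esk3_0))))" by (metis k1_c_0_19 k1_ld k1_rd)
  have k1_c_0_31: "\<And>X1 X2. (mult (iv (mult X1 X2)) X1) = (iv X2)" by (metis k1_c_0_28 k1_c_0_29)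
  have k1_c_0_32: "\<And>X1 X2. (mult X1 (mult (iv X1) X2)) = X2" by (metis k1_m k1_i2 k1_o1)
  have k1_c_0_34: "(mult esk1_0 (mult (add (iv esk1_0) esk2_0) (add (iv (mult esk1_0 (add (iv esk1_0) esk2_0))) (mult (iv (add (iv esk1_0) esk2_0)) (mult esk2_0 (add (iv (mult (iv (add (iv esk1_0) esk2_0)) esk2_0)) esk3_0)))))) \<noteq> (mult esk1_0 (add (iv esk1_0) (mult esk2_0 (add (iv esk2_0) esk3_0))))" by (metis k1_c_0_30 k1_m)
  have k1_c_0_35: "\<And>X1 X2. (iv (mult (iv X1) X2)) = (mult (iv X2) X1)" by (metis k1_c_0_31 k1_c_0_32)
  have k1_c_0_37: "(mult esk1_0 (mult (add (iv esk1_0) esk2_0) (add (iv (mult esk1_0 (add (iv esk1_0) esk2_0))) (mult (iv (add (iv esk1_0) esk2_0)) (mult esk2_0 (add (mult (iv esk2_0) (add (iv esk1_0) esk2_0)) esk3_0)))))) \<noteq> (mult esk1_0 (add (iv esk1_0) (mult esk2_0 (add (iv esk2_0) esk3_0))))" by (metis k1_c_0_34 k1_c_0_35)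
  have k1_c_0_38: "\<And>X1 X2 X3. (add X1 (mult X2 (add (iv X2) X3))) = (mult X2 (add (mult (iv X2) X1) X3))" by (metis k1_sb k1_c_0_32)
  have k1_c_0_39: "\<And>X1 X2. (mult (iv X1) (iv X2)) = (iv (mult X2 X1))" by (metis k1_c_0_22 k1_c_0_28)
  have k1_c_0_40: "(mult esk1_0 (mult (add (iv esk1_0) esk2_0) (add (iv (mult esk1_0 (add (iv esk1_0) esk2_0))) (mult (iv (add (iv esk1_0) esk2_0)) (mult esk2_0 (add (mult (iv esk2_0) (add (iv esk1_0) esk2_0)) esk3_0)))))) \<noteq> (mult esk1_0 (mult esk2_0 (add (iv (mult esk1_0 esk2_0)) esk3_0)))" by (metis k1_c_0_37 k1_c_0_38 k1_c_0_39)
  have k1_c_0_41: "\<And>X1 X2 X3 X4. (add X1 (mult (iv X2) (mult X3 (add (mult (iv X3) X2) X4)))) = (mult (iv X2) (mult X3 (add (mult (iv X3) (mult X2 X1)) X4)))" by (metis k1_c_0_38 k1_c_0_35 k1_m)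
  show False by (metis k1_c_0_40 k1_c_0_41 k1_c_0_28 k1_c_0_39 k1_c_0_32)
qed

lemma K_third:
  fixes add mult lam rho :: "'a \<Rightarrow> 'a \<Rightarrow> 'a" and one :: 'a and iv :: "'a \<Rightarrow> 'a"
  assumes k3_a: "\<And>A B C. add (add A B) C = add A (add B C)"
  and k3_m: "\<And>A B C. mult (mult A B) C = mult A (mult B C)"
  and k3_o1: "\<And>A. mult one A = A" and k3_o2: "\<And>A. mult A one = A"
  and k3_i1: "\<And>A. mult (iv A) A = one" and k3_i2: "\<And>A. mult A (iv A) = one"
  and k3_sb: "\<And>A B C. mult A (add B C) = add (mult A B) (mult A (add (iv A) C))"
  and k3_ld: "\<And>A B. lam A B = mult A (add (iv A) B)"
  and k3_rd: "\<And>B A. rho B A = mult (iv (add (iv A) B)) B"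
  and k3_k: "\<And>X B C. add X (mult B C) = add X (mult B (add one C))"
  shows "rho esk3_0 (rho esk2_0 esk1_0) = rho (rho esk3_0 esk2_0) (rho (lam esk2_0 esk3_0) esk1_0)"
proof (rule ccontr)
  have k3_c_0_21: "\<And>X1 X2. (mult (iv X1) (mult X1 X2)) = X2" by (metis k3_m k3_i1 k3_o1)
  have k3_c_0_22: "\<And>X1 X2. (mult X1 (mult X2 (iv (mult X1 X2)))) = one" by (metis k3_i2 k3_m)
  assume k3_c_0_25: "(rho esk3_0 (rho esk2_0 esk1_0)) \<noteq> (rho (rho esk3_0 esk2_0) (rho (lam esk2_0 esk3_0) esk1_0))"
  have k3_c_0_28: "\<And>X1 X2. (mult X1 (iv (mult X2 X1))) = (iv X2)" by (metis k3_c_0_21 k3_c_0_22 k3_o2)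
  have k3_c_0_29: "\<And>X1. (iv (iv X1)) = X1" by (metis k3_c_0_21 k3_i1 k3_o2)
  have k3_c_0_32: "\<And>X1 X2. (mult X1 (mult (iv X1) X2)) = X2" by (metis k3_m k3_i2 k3_o1)
  have k3_c_0_36: "\<And>X1 X2. (mult (iv (mult X1 X2)) X1) = (iv X2)" by (metis k3_c_0_28 k3_c_0_29)
  have k3_c_0_38: "\<And>X1 X2 X3. (add X1 (mult X2 (add (iv X2) X3))) = (mult X2 (add (mult (iv X2) X1) X3))" by (metis k3_sb k3_c_0_32)
  have k3_c_0_40: "(mult (iv (add (iv (mult (iv (add (iv esk1_0) esk2_0)) esk2_0)) esk3_0)) esk3_0) \<noteq> (mult (iv (add (iv (mult (iv (add (iv esk1_0) (mult esk2_0 (add (iv esk2_0) esk3_0)))) (mult esk2_0 (add (iv esk2_0) esk3_0)))) (mult (iv (add (iv esk2_0) esk3_0)) esk3_0))) (mult (iv (add (iv esk2_0) esk3_0)) esk3_0))" by (metis k3_c_0_25 k3_ld k3_rd)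
  have k3_c_0_41: "\<And>X1 X2. (iv (mult (iv X1) X2)) = (mult (iv X2) X1)" by (metis k3_c_0_36 k3_c_0_32)
  have k3_c_0_42: "\<And>X1 X2. (mult (iv X1) (iv X2)) = (iv (mult X2 X1))" by (metis k3_c_0_21 k3_c_0_28)
  have k3_c_0_43: "\<And>X1 X2 X3 X4. (add X1 (mult X2 (add (mult (iv X2) X3) X4))) = (mult X2 (add (mult (iv X2) (add X1 X3)) X4))" by (metis k3_a k3_c_0_38)
  have k3_c_0_45: "(mult (iv (add (mult (iv (mult esk2_0 (add (iv esk2_0) esk3_0))) (add (iv esk1_0) (mult esk2_0 (add (iv esk2_0) esk3_0)))) (mult (iv (add (iv esk2_0) esk3_0)) esk3_0))) (mult (iv (add (iv esk2_0) esk3_0)) esk3_0)) \<noteq> (mult (iv (add (mult (iv esk2_0) (add (iv esk1_0) esk2_0)) esk3_0)) esk3_0)" by (metis k3_c_0_40 k3_c_0_41)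
  have k3_c_0_46: "\<And>X1 X2 X3. (mult (iv X1) (mult (iv X2) X3)) = (mult (iv (mult X2 X1)) X3)" by (metis k3_m k3_c_0_42)
  have k3_c_0_47: "\<And>X1 X2 X3. (mult X1 (add (mult (iv X1) (add X2 X1)) X3)) = (add X2 (mult X1 X3))" by (metis k3_c_0_43 k3_i2 k3_k k3_c_0_29)
  have k3_c_0_48: "(mult (iv (mult (add (iv esk2_0) esk3_0) (add (mult (iv (mult esk2_0 (add (iv esk2_0) esk3_0))) (add (iv esk1_0) (mult esk2_0 (add (iv esk2_0) esk3_0)))) (mult (iv (add (iv esk2_0) esk3_0)) esk3_0)))) esk3_0) \<noteq> (mult (iv (add (mult (iv esk2_0) (add (iv esk1_0) esk2_0)) esk3_0)) esk3_0)" by (metis k3_c_0_45 k3_c_0_46)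
  have k3_c_0_49: "\<And>X1 X2 X3. (add (mult (iv X1) (add X2 X1)) X3) = (mult (iv X1) (add X2 (mult X1 X3)))" by (metis k3_c_0_21 k3_c_0_47)
  have k3_c_0_50: "\<And>X1 X2 X3. (mult X1 (mult (iv (mult X2 X1)) X3)) = (mult (iv X2) X3)" by (metis k3_m k3_c_0_28)
  show False by (metis k3_c_0_48 k3_c_0_49 k3_m k3_c_0_32 k3_c_0_50 k3_c_0_41)
qed


lemma KB_T_core:
  fixes addS mS :: "'a \<Rightarrow> 'a \<Rightarrow> 'a" and oneS :: 'a and ivS :: "'a \<Rightarrow> 'a"
    and addT mT :: "'b \<Rightarrow> 'b \<Rightarrow> 'b" and oneT :: 'b and ivT :: "'b \<Rightarrow> 'b"
    and sg :: "'b \<Rightarrow> 'a \<Rightarrow> 'a" and d :: "'a \<Rightarrow> 'b \<Rightarrow> 'b" and bb :: "'a \<Rightarrow> 'a \<Rightarrow> 'b"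
  assumes e_as: "\<And>A B C. addS (addS A B) C = addS A (addS B C)"
  and e_ms: "\<And>A B C. mS (mS A B) C = mS A (mS B C)"
  and e_o1s: "\<And>A. mS oneS A = A" and e_o2s: "\<And>A. mS A oneS = A"
  and e_i1s: "\<And>A. mS (ivS A) A = oneS" and e_i2s: "\<And>A. mS A (ivS A) = oneS"
  and e_sbs: "\<And>A B C. mS A (addS B C) = addS (mS A B) (mS A (addS (ivS A) C))"
  and e_ks: "\<And>X B C. addS X (mS B C) = addS X (mS B (addS oneS C))"
  and e_at: "\<And>A B C. addT (addT A B) C = addT A (addT B C)"
  and e_mt: "\<And>A B C. mT (mT A B) C = mT A (mT B C)"
  and e_o1t: "\<And>A. mT oneT A = A" and e_o2t: "\<And>A. mT A oneT = A"
  and e_i1t: "\<And>A. mT (ivT A) A = oneT" and e_i2t: "\<And>A. mT A (ivT A) = oneT"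
  and e_sbt: "\<And>A B C. mT A (addT B C) = addT (mT A B) (mT A (addT (ivT A) C))"
  and e_kt: "\<And>X B C. addT X (mT B C) = addT X (mT B (addT oneT C))"
  and e_sgadd: "\<And>U A B. sg U (addS A B) = addS (sg U A) (sg U B)"
  and e_sgmul: "\<And>U A B. sg U (mS A B) = mS (sg U A) (sg U B)"
  and e_sghom: "\<And>U V A. sg (mT U V) A = sg U (sg V A)"
  and e_dend: "\<And>A U V. d A (addT U V) = addT (d A U) (d A V)"
  and e_coc: "\<And>A B C U V. addT (addT (addT (bb (addS A B) C) (d C (bb A B))) (d C (d B U))) (d C V) = addT (addT (addT (bb A (addS B C)) (d (addS B C) U)) (bb B C)) (d C V)"
  and e_compat: "\<And>A B C U V. addT (addT (bb (mS A (sg U B)) (mS A (addS (ivS A) (sg U C)))) (d (mS A (addS (ivS A) (sg U C))) (mT U V))) (mT U (addT (bb (sg (ivT U) (ivS A)) C) (d C (ivT U)))) = mT U (addT (bb B C) (d C V))"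
  and e_c1: "\<And>A U. d A (d oneS U) = d A U"
  and e_c2: "\<And>A U. addT (bb oneS A) U = addT oneT U"
  and e_c3: "\<And>A B. bb A (addS oneS B) = bb A B"
  shows "addT (addT (bb esk1_0 (mS esk3_0 (sg esk4_0 esk5_0))) (d (mS esk3_0 (sg esk4_0 esk5_0)) esk2_0)) (mT esk4_0 esk6_0) = addT (addT (bb esk1_0 (mS esk3_0 (sg esk4_0 (addS oneS esk5_0)))) (d (mS esk3_0 (sg esk4_0 (addS oneS esk5_0))) esk2_0)) (mT esk4_0 (addT (addT (bb oneS esk5_0) (d esk5_0 oneT)) esk6_0))"
proof (rule ccontr)
  have e_c_0_36: "\<And>X5 X6. (addT X5 (mT (ivT (addT oneT X6)) X6)) = (addT X5 oneT)" by (metis e_kt e_i1t)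
  have e_c_0_39: "\<And>X5 X6. (mT (ivT X5) (mT X5 X6)) = X6" by (metis e_mt e_i1t e_o1t)
  have e_c_0_41: "\<And>X5. (addT X5 (ivT (addT oneT oneT))) = (addT X5 oneT)" by (metis e_c_0_36 e_o2t)
  have e_c_0_42: "\<And>X5 X6. (addT X5 (addT oneT X6)) = (addT X5 X6)" by (metis e_kt e_o1t)
  have e_c_0_44: "\<And>X5. (ivT (ivT X5)) = X5" by (metis e_c_0_39 e_i1t e_o2t)
  have e_c_0_45: "\<And>X5 X6. (addT X5 (addT (ivT (addT oneT oneT)) X6)) = (addT X5 X6)" by (metis e_at e_c_0_41 e_c_0_42)
  have e_c_0_46: "\<And>X5 X6 X7. (addT X5 (mT (ivT X6) (addT X6 X7))) = (mT (ivT X6) (addT (mT X6 X5) X7))" by (metis e_sbt e_c_0_39 e_c_0_44)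
  have e_c_0_47: "\<And>X5 X6 X7. (addT X5 (mT X6 (addT (ivT (addT oneT oneT)) X7))) = (addT X5 (mT X6 X7))" by (metis e_kt e_c_0_45)
  have e_c_0_49: "\<And>X5 X6. (mT (addT oneT oneT) (addT (mT (ivT (addT oneT oneT)) X5) X6)) = (addT X5 (mT (addT oneT oneT) X6))" by (metis e_c_0_46 e_c_0_47 e_c_0_44)
  have e_c_0_51: "\<And>X5. (mT (addT oneT oneT) (addT oneT X5)) = (addT oneT (mT (addT oneT oneT) X5))" by (metis e_c_0_49 e_i2t e_c_0_44 e_at e_c_0_42)
  have e_c_0_52: "\<And>X5 X6. (mT (addT oneT (mT (addT oneT oneT) X5)) X6) = (mT (addT oneT oneT) (mT (addT oneT X5) X6))" by (metis e_mt e_c_0_51)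
  have e_c_0_53: "\<And>X5 X6 X7 X8. (mT (ivT X5) (addT (mT X5 (addT X6 X7)) X8)) = (addT X6 (mT (ivT X5) (addT (mT X5 X7) X8)))" by (metis e_at e_c_0_46)
  have e_c_0_55: "\<And>X5. (mT (addT oneT oneT) (mT (addT oneT oneT) X5)) = (mT (addT oneT oneT) X5)" by (metis e_c_0_52 e_i2t e_c_0_41)
  have e_c_0_56: "\<And>X5 X6 X7 X8. (mT X5 (addT X6 (mT (ivT X5) (addT (mT X5 X7) X8)))) = (addT (mT X5 (addT X6 X7)) X8)" by (metis e_c_0_39 e_c_0_53 e_c_0_44)
  have e_c_0_57: "\<And>X5 X6. (mT X5 (mT (ivT X5) X6)) = X6" by (metis e_mt e_i2t e_o1t)
  have e_c_0_59: "\<And>X5 X6 X7 X8. (addT X5 (mT (ivT (addT X6 X7)) (addT X6 (addT X7 X8)))) = (mT (ivT (addT X6 X7)) (addT (mT (addT X6 X7) X5) X8))" by (metis e_c_0_46 e_at)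
  have e_c_0_60: "(addT oneT oneT) = oneT" by (metis e_c_0_55 e_i2t e_o2t)
  have e_c_0_61: "\<And>X5 X6 X7. (addT (mT X5 (addT X6 oneT)) X7) = (addT (mT X5 X6) X7)" by (metis e_c_0_56 e_o2t e_c_0_46 e_c_0_57)
  have e_c_0_62: "\<And>X5 X1 X6. (mT (ivT X5) (addT (mT X5 (bb oneS X1)) X6)) = (mT (ivT X5) (addT X5 X6))" by (metis e_c2 e_c_0_46 e_o2t)
  have e_c_0_63: "\<And>X5 X6. (mT (ivT (addT X5 oneT)) (addT (mT (addT X5 oneT) X6) oneT)) = (addT X6 oneT)" by (metis e_c_0_59 e_c_0_60 e_i1t)
  have e_c_0_64: "\<And>X5 X6 X7 X8. (addT (mT X5 (addT X6 (addT X7 oneT))) X8) = (addT (mT X5 (addT X6 X7)) X8)" by (metis e_c_0_56 e_c_0_61)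
  have e_c_0_65: "\<And>X5 X6. (addT (mT (ivT (addT X5 oneT)) X5) X6) = (addT oneT X6)" by (metis e_c_0_61 e_i1t)
  have e_c_0_66: "\<And>X5 X1 X6. (addT (mT X5 (bb oneS X1)) X6) = (addT X5 X6)" by (metis e_c_0_39 e_c_0_62 e_c_0_44 e_c_0_57)
  have e_c_0_67: "\<And>X5 X6. (mT X5 (mT X6 (ivT (mT X5 X6)))) = oneT" by (metis e_i2t e_mt)
  have e_c_0_68: "\<And>X5 X6. (mT (addT X5 oneT) (addT X6 oneT)) = (addT (mT (addT X5 oneT) X6) oneT)" by (metis e_c_0_39 e_c_0_63 e_c_0_44)
  have e_c_0_69: "\<And>X5 X6 X7. (addT (mT (ivT X5) (addT X6 X5)) X7) = (mT (ivT X5) (addT X6 (mT X5 X7)))" by (metis e_c_0_56 e_i1t e_c_0_44 e_kt)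
  have e_c_0_70: "\<And>X5 X6 X7 X8. (addT (mT X5 (addT X6 (mT (ivT (addT X7 oneT)) X7))) X8) = (addT (mT X5 X6) X8)" by (metis e_c_0_64 e_c_0_65 e_c_0_42 e_c_0_61)
  have e_c_0_71: "\<And>X5. (addT (ivT (addT oneT oneT)) X5) = (addT oneT X5)" by (metis e_c_0_66 e_c_0_65 e_c2)
  have e_c_0_72: "\<And>X5 X6. (mT X5 (ivT (mT X6 X5))) = (ivT X6)" by (metis e_c_0_39 e_c_0_67 e_o2t)
  have e_c_0_73: "\<And>X5 X6 X7. (mT (ivT X5) (mT (addT X6 X5) (addT X7 oneT))) = (addT (mT (ivT X5) (mT (addT X6 X5) X7)) oneT)" by (metis e_c_0_68 e_c_0_69 e_o2t e_mt)
  have e_c_0_74: "\<And>X5 X6 X7. (addT (mT (ivT (addT X5 (mT (ivT (addT X6 oneT)) X6))) X5) X7) = (addT oneT X7)" by (metis e_c_0_70 e_i1t)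
  have e_c_0_75: "\<And>X5 X6. (addT (mT X5 (ivT (addT oneT oneT))) X6) = (addT X5 X6)" by (metis e_c_0_61 e_c_0_71 e_o2t)
  have e_c_0_76: "\<And>X5 X6. (mT (ivT X5) (ivT X6)) = (ivT (mT X6 X5))" by (metis e_c_0_39 e_c_0_72)
  have e_c_0_77: "\<And>X5 X6. (addT X5 (mT X6 (ivT (addT oneT oneT)))) = (addT X5 X6)" by (metis e_kt e_c_0_41 e_o2t)
  have e_c_0_78: "\<And>X5 X6 X7. (mT X5 (addT (mT (ivT X5) (mT (addT X6 X5) X7)) oneT)) = (mT (addT X6 X5) (addT X7 oneT))" by (metis e_c_0_39 e_c_0_73 e_c_0_44)
  have e_c_0_79: "\<And>X5 X6. (addT (ivT (addT oneT (mT (ivT (addT X5 oneT)) X5))) X6) = (addT oneT X6)" by (metis e_c_0_66 e_c_0_74 e_c2)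
  have e_c_0_80: "\<And>X5 X6. (addT (ivT (mT (addT oneT oneT) X5)) X6) = (addT (ivT X5) X6)" by (metis e_c_0_75 e_c_0_76)
  have e_c_0_81: "\<And>X5 X6. (addT X5 (ivT (mT (addT oneT oneT) X6))) = (addT X5 (ivT X6))" by (metis e_c_0_77 e_c_0_76)
  have e_c_0_82: "\<And>X5 X6. (mT (addT X5 X6) (addT (ivT (addT X5 X6)) oneT)) = (mT X6 (addT (ivT X6) oneT))" by (metis e_c_0_78 e_i2t e_o2t)
  have e_c_0_83: "\<And>X5 X6. (addT (ivT (addT oneT (mT (ivT (addT oneT (addT X5 oneT))) X5))) X6) = (addT oneT X6)" by (metis e_c_0_79 e_kt e_at)
  have e_c_0_84: "\<And>X5 X6. (ivT (mT (ivT X5) X6)) = (mT (ivT X6) X5)" by (metis e_c_0_76 e_c_0_44)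
  have e_c_0_85: "\<And>X5 X6. (addT (ivT (addT oneT (ivT (mT X5 (addT (ivT X5) oneT))))) X6) = (addT oneT X6)" by (metis e_c_0_79 e_c_0_80 e_c_0_76 e_mt e_c_0_81)
  have e_c_0_86: "\<And>X5. (mT (ivT (addT oneT (addT X5 oneT))) (addT oneT X5)) = (addT oneT (mT (ivT (addT oneT (addT X5 oneT))) X5))" by (metis e_c_0_82 e_c_0_83 e_c_0_60 e_o2t e_c_0_84 e_c_0_64 e_c_0_69 e_mt e_c_0_57)
  have e_c_0_87: "\<And>X5. (addT oneT (ivT (mT X5 (addT (ivT X5) oneT)))) = (ivT (mT X5 (addT (ivT X5) oneT)))" by (metis e_c_0_82 e_c_0_85 e_c_0_60 e_o2t e_c_0_44 e_c_0_61 e_i2t)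
  have e_c_0_88: "\<And>X5. (ivT (addT oneT (mT (ivT (addT oneT (addT X5 oneT))) X5))) = (mT (ivT (addT oneT X5)) (addT oneT (addT X5 oneT)))" by (metis e_c_0_84 e_c_0_86)
  have e_c_0_89: "\<And>X5 X6 X7. (addT X5 (addT (mT (ivT (addT oneT X6)) X6) X7)) = (addT X5 X7)" by (metis e_at e_c_0_36 e_c_0_42)
  have e_c_0_90: "\<And>X5. (mT (ivT (addT oneT X5)) (addT oneT (addT X5 oneT))) = (addT oneT (mT (ivT (addT oneT X5)) (addT X5 oneT)))" by (metis e_c_0_87 e_c_0_88 e_c_0_64 e_i1t e_c_0_60 e_o2t e_kt)
  have e_c_0_91: "\<And>X5 X6 X7 X8. (addT X5 (mT X6 (addT (mT (ivT (addT oneT X7)) X7) X8))) = (addT X5 (mT X6 X8))" by (metis e_kt e_c_0_89)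
  have e_c_0_94: "\<And>X5 X6. (mT (addT oneT X5) (addT oneT X6)) = (addT oneT (mT (addT oneT X5) X6))" by (metis e_c_0_53 e_c_0_90 e_c_0_44 e_at e_c_0_61 e_c_0_89 e_c_0_91)
  have e_c_0_100: "\<And>X5 X6 X7. (mT (addT oneT (mT (addT oneT X5) X6)) X7) = (mT (addT oneT X5) (mT (addT oneT X6) X7))" by (metis e_mt e_c_0_94)
  have e_c_0_105: "\<And>X1 X2. (addS X1 (mS (ivS (addS oneS X2)) X2)) = (addS X1 oneS)" by (metis e_ks e_i1s)
  have e_c_0_107: "\<And>X5 X6. (mT (addT oneT X5) (mT (addT oneT (ivT (addT oneT X5))) X6)) = X6" by (metis e_c_0_100 e_i2t e_c_0_60 e_o1t)
  have e_c_0_111: "\<And>X1 X2. (mS (ivS X1) (mS X1 X2)) = X2" by (metis e_ms e_i1s e_o1s)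
  have e_c_0_113: "\<And>X1. (addS X1 (ivS (addS oneS oneS))) = (addS X1 oneS)" by (metis e_c_0_105 e_o2s)
  have e_c_0_114: "\<And>X1 X2. (addS X1 (addS oneS X2)) = (addS X1 X2)" by (metis e_ks e_o1s)
  have e_c_0_115: "\<And>X5. (addT oneT (ivT (addT oneT X5))) = (ivT (addT oneT X5))" by (metis e_c_0_72 e_c_0_107 e_mt e_i2t e_o2t)
  have e_c_0_120: "\<And>X1 X2. (addS X1 (mS X1 (addS (ivS X1) X2))) = (mS X1 (addS oneS X2))" by (metis e_sbs e_o2s)
  have e_c_0_121: "\<And>X1. (ivS (ivS X1)) = X1" by (metis e_c_0_111 e_i1s e_o2s)
  have e_c_0_122: "\<And>X1 X2. (addS X1 (addS (ivS (addS oneS oneS)) X2)) = (addS X1 X2)" by (metis e_as e_c_0_113 e_c_0_114)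
  have e_c_0_123: "\<And>X5 X6. (addT oneT (mT (ivT (addT X5 X6)) X5)) = (mT (ivT (addT X5 X6)) X5)" by (metis e_c_0_115 e_c_0_46 e_o2t e_c_0_84)
  have e_c_0_126: "\<And>X1 X5 X2 X3 X6. (addT (bb (mS X1 (sg X5 X2)) (mS X1 (addS (ivS X1) (sg X5 X3)))) (addT (d (mS X1 (addS (ivS X1) (sg X5 X3))) (mT X5 X6)) (mT X5 (addT (bb (sg (ivT X5) (ivS X1)) X3) (d X3 (ivT X5)))))) = (mT X5 (addT (bb X2 X3) (d X3 X6)))" by (metis e_compat e_at)
  have e_c_0_127: "\<And>X5 X1. (sg X5 (sg oneT X1)) = (sg X5 X1)" by (metis e_sghom e_o2t)
  have e_c_0_130: "\<And>X1 X2. (addS (ivS X1) (mS (ivS X1) (addS X1 X2))) = (mS (ivS X1) (addS oneS X2))" by (metis e_c_0_120 e_c_0_121)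
  have e_c_0_131: "\<And>X1 X2 X3. (addS X1 (mS X2 (addS (ivS (addS oneS oneS)) X3))) = (addS X1 (mS X2 X3))" by (metis e_ks e_c_0_122)
  have e_c_0_133: "\<And>X5 X6 X7. (mT (ivT (addT X5 X6)) (mT X5 (addT oneT X7))) = (addT oneT (mT (ivT (addT X5 X6)) (mT X5 X7)))" by (metis e_c_0_94 e_c_0_123 e_mt)
  have e_c_0_135: "\<And>X5 X1 X2. (mS (ivS (sg X5 X1)) (sg X5 (mS X1 X2))) = (sg X5 X2)" by (metis e_c_0_111 e_sgmul)
  have e_c_0_136: "\<And>X1 X2. (mS X1 (mS (ivS X1) X2)) = X2" by (metis e_ms e_i2s e_o1s)
  have e_c_0_137: "\<And>X5 X1 X2 X6. (mT X5 (addT (bb (sg oneT X1) X2) (d X2 X6))) = (mT X5 (addT (bb X1 X2) (d X2 X6)))" by (metis e_c_0_126 e_c_0_127)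
  have e_c_0_140: "\<And>X1 X2. (addS X1 (mS X2 (ivS (addS oneS oneS)))) = (addS X1 X2)" by (metis e_ks e_c_0_113 e_o2s)
  have e_c_0_141: "\<And>X1. (addS oneS (mS (addS oneS oneS) X1)) = (mS (addS oneS oneS) (addS oneS X1))" by (metis e_c_0_130 e_c_0_131 e_c_0_121 e_as e_c_0_114)
  have e_c_0_143: "\<And>X5 X6. (addT oneT (mT (ivT (addT X5 X6)) (addT X5 oneT))) = (mT (ivT (addT X5 X6)) (addT X5 oneT))" by (metis e_c_0_133 e_c_0_68 e_at e_c_0_42 e_o2t)
  have e_c_0_145: "\<And>X5 X1. (sg (ivT X5) (sg X5 X1)) = (sg oneT X1)" by (metis e_sghom e_i1t)
  have e_c_0_146: "\<And>X5 X1 X2. (mS (ivS (sg X5 X1)) (sg X5 X2)) = (sg X5 (mS (ivS X1) X2))" by (metis e_c_0_135 e_c_0_136)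
  have e_c_0_147: "\<And>X1 X2 X5. (addT (bb (sg oneT X1) X2) (d X2 X5)) = (addT (bb X1 X2) (d X2 X5))" by (metis e_c_0_57 e_c_0_137)
  have e_c_0_148: "\<And>X1 X2 X3 X5 X6. (addT (bb (addS X1 X2) X3) (d X3 (addT (bb X1 X2) (addT (d X2 X5) X6)))) = (addT (bb X1 (addS X2 X3)) (addT (d (addS X2 X3) X5) (addT (bb X2 X3) (d X3 X6))))" by (metis e_coc e_at e_dend)
  have e_c_0_149: "(mS (addS oneS oneS) (addS oneS oneS)) = (addS oneS oneS)" by (metis e_c_0_140 e_c_0_141 e_c_0_113 e_c_0_114)
  have e_c_0_150: "\<And>X1 X5 X6. (d X1 (addT X5 (d oneS X6))) = (d X1 (addT X5 X6))" by (metis e_dend e_c1)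
  have e_c_0_151: "\<And>X5 X6. (mT (ivT (mT X5 X6)) X5) = (ivT X6)" by (metis e_c_0_72 e_c_0_44)
  have e_c_0_152: "\<And>X5 X6. (ivT (mT X5 (ivT X6))) = (mT X6 (ivT X5))" by (metis e_c_0_57 e_c_0_72)
  have e_c_0_153: "\<And>X5 X1 X2. (sg X5 (mS X1 (sg oneT X2))) = (sg X5 (mS X1 X2))" by (metis e_sgmul e_c_0_127)
  have e_c_0_154: "\<And>X5 X6. (addT oneT (mT (ivT (addT X5 oneT)) (addT X5 X6))) = (mT (ivT (addT X5 oneT)) (addT X5 X6))" by (metis e_c_0_123 e_c_0_143 e_c_0_84 e_o2t)
  have e_c_0_155: "\<And>X5 X1 X2 X6. (addT oneT (addT (d (sg X5 (mS (ivS X1) (addS X1 X2))) (mT X5 X6)) (mT X5 (addT (bb X1 X2) (d X2 (ivT X5)))))) = (mT X5 (addT (bb X1 X2) (d X2 X6)))" by (metis e_c_0_126 e_i1s e_c_0_121 e_sgadd e_c_0_145 e_c2 e_c_0_146 e_c_0_147)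
  have e_c_0_156: "(ivT oneT) = oneT" by (metis e_o1t e_i2t)
  have e_c_0_157: "\<And>X1 X2 X5 X6. (addT (bb (addS oneS X1) X2) (d X2 (addT oneT (addT (d X1 X5) X6)))) = (addT oneT (addT (d (addS X1 X2) X5) (addT (bb X1 X2) (d X2 X6))))" by (metis e_c2 e_c_0_148)
  have e_c_0_158: "(addS oneS oneS) = oneS" by (metis e_c_0_111 e_c_0_149 e_i1s)
  have e_c_0_159: "\<And>X1 X5 X6 X7. (d X1 (addT X5 (addT (d oneS X6) X7))) = (d X1 (addT X5 (addT X6 X7)))" by (metis e_dend e_c_0_150 e_at)
  have e_c_0_160: "\<And>X1 X5 X6. (addT (ivT (mT (bb oneS X1) X5)) X6) = (addT (ivT X5) X6)" by (metis e_c_0_66 e_c_0_151)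
  have e_c_0_161: "\<And>X5 X6 X7. (ivT (mT X5 (mT X6 (ivT X7)))) = (mT X7 (ivT (mT X5 X6)))" by (metis e_c_0_152 e_mt e_c_0_76)
  have e_c_0_162: "\<And>X5 X1. (sg X5 (mS (ivS (sg oneT X1)) X1)) = (sg X5 oneS)" by (metis e_c_0_153 e_i1s)
  have e_c_0_163: "\<And>X5 X1 X2 X6. (addT oneT (mT X5 (addT (bb X1 X2) (d X2 X6)))) = (mT X5 (addT (bb X1 X2) (d X2 X6)))" by (metis e_c_0_154 e_c_0_155 e_c_0_60 e_c_0_156 e_o1t)
  have e_c_0_164: "\<And>X1 X5 X6. (addT oneT (addT (d (addS oneS X1) X5) (d X1 X6))) = (addT oneT (d X1 (addT oneT (addT X5 X6))))" by (metis e_c_0_157 e_c2 e_c_0_158 e_c_0_159 e_c_0_42)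
  have e_c_0_165: "(ivS oneS) = oneS" by (metis e_o1s e_i2s)
  have e_c_0_166: "\<And>X5 X1 X6 X7. (addT (mT X5 (ivT (mT (bb oneS X1) X6))) X7) = (addT (mT X5 (ivT X6)) X7)" by (metis e_c_0_160 e_c_0_161 e_c_0_152)
  have e_c_0_167: "\<And>X5 X1 X2. (sg X5 (mS (sg oneT X1) X2)) = (sg X5 (mS X1 X2))" by (metis e_sgmul e_c_0_127)
  have e_c_0_168: "\<And>X5. (sg X5 (ivS (sg oneT oneS))) = (sg X5 oneS)" by (metis e_c_0_162 e_o2s)
  have e_c_0_169: "\<And>X5 X1. (sg oneT (sg X5 X1)) = (sg X5 X1)" by (metis e_sghom e_o1t)
  have e_c_0_170: "\<And>X5. (addT oneT (ivT X5)) = (ivT X5)" by (metis e_c_0_163 e_c_0_151)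
  have e_c_0_171: "\<And>X5 X6. (addT oneT (d oneS (addT oneT (addT X5 X6)))) = (addT oneT (d oneS (addT X5 X6)))" by (metis e_c_0_164 e_c_0_113 e_c_0_158 e_c_0_165 e_dend)
  have e_c_0_172: "\<And>X5 X6. (mT (ivT (addT X5 oneT)) (addT X6 oneT)) = (addT (mT (ivT (addT X5 oneT)) X6) oneT)" by (metis e_c_0_63 e_c_0_57)
  have e_c_0_173: "\<And>X5 X6. (addT (ivT (mT X5 (addT (ivT X5) oneT))) X6) = (addT oneT X6)" by (metis e_c_0_166 e_c_0_65 e_c_0_160 e_c_0_76)
  have e_c_0_174: "\<And>X1 X2. (mS X1 (mS X2 (ivS (mS X1 X2)))) = oneS" by (metis e_i2s e_ms)
  have e_c_0_175: "\<And>X5 X1. (sg X5 (mS (ivS (sg oneT oneS)) X1)) = (sg X5 X1)" by (metis e_c_0_167 e_c_0_168 e_o1s)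
  have e_c_0_176: "\<And>X1 X5 X2. (sg oneT (mS X1 (sg X5 X2))) = (mS (sg oneT X1) (sg X5 X2))" by (metis e_sgmul e_c_0_169)
  have e_c_0_177: "\<And>X5. (addT oneT X5) = X5" by (metis e_c_0_123 e_c_0_170 e_o2t e_c_0_44)
  have e_c_0_178: "\<And>X5 X6 X7. (addT X5 (d oneS (addT oneT (addT X6 X7)))) = (addT X5 (d oneS (addT X6 X7)))" by (metis e_c_0_46 e_c_0_171 e_c_0_156 e_o1t e_c_0_42)
  have e_c_0_179: "\<And>X5 X6. (addT (ivT (mT X5 (addT (mT (addT (ivT X5) oneT) X6) oneT))) oneT) = (ivT (addT X6 oneT))" by (metis e_c_0_172 e_c_0_173 e_c_0_60 e_o2t e_c_0_76 e_mt e_c_0_68)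
  have e_c_0_180: "\<And>X5 X6 X7. (addT X5 (mT (ivT (addT (mT (ivT (addT oneT X6)) X6) X7)) X7)) = (addT X5 oneT)" by (metis e_c_0_91 e_i1t)
  have e_c_0_181: "\<And>X5. (addT (ivT (addT X5 oneT)) oneT) = (ivT (addT X5 oneT))" by (metis e_c_0_63 e_i2t e_c_0_60 e_o2t)
  have e_c_0_182: "\<And>X1 X2. (mS X1 (ivS (mS X2 X1))) = (ivS X2)" by (metis e_c_0_111 e_c_0_174 e_o2s)
  have e_c_0_183: "\<And>X5 X1. (mS (sg oneT oneS) (sg X5 X1)) = (sg X5 X1)" by (metis e_c_0_175 e_c_0_176 e_c_0_168 e_c_0_169)
  have e_c_0_184: "\<And>X5 X6 X7. (addT X5 (mT (addT X5 X6) (addT (mT (ivT (addT X5 X6)) X6) X7))) = (mT (addT X5 X6) X7)" by (metis e_c_0_53 e_i1t e_c_0_44 e_c_0_177)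
  have e_c_0_185: "\<And>X5 X6. (addT X5 (d oneS (addT oneT (ivT (addT X6 oneT))))) = (addT X5 (d oneS (ivT (addT X6 oneT))))" by (metis e_c_0_178 e_c_0_179)
  have e_c_0_186: "\<And>X5 X6. (addT X5 (ivT (addT (mT (ivT (addT oneT X6)) X6) oneT))) = (addT X5 oneT)" by (metis e_c_0_77 e_c_0_180 e_c_0_41)
  have e_c_0_187: "\<And>X5 X6. (addT (mT (ivT (addT X5 X6)) X6) oneT) = (mT (ivT (addT X5 X6)) X6)" by (metis e_c_0_181 e_c_0_69 e_o2t e_c_0_84)
  have e_c_0_188: "\<And>X5 X6 X7. (addT (mT X5 (addT X6 (ivT X5))) X7) = (mT X5 (addT X6 (mT (ivT X5) X7)))" by (metis e_c_0_56 e_i2t e_kt)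
  have e_c_0_189: "\<And>X5 X1. (sg X5 (sg (ivT X5) X1)) = (sg oneT X1)" by (metis e_sghom e_i2t)
  have e_c_0_190: "(ivS (sg oneT oneS)) = oneS" by (metis e_c_0_182 e_c_0_183 e_i2s)
  have e_c_0_191: "\<And>X5 X6 X7. (addT (mT (ivT (mT (addT X5 oneT) X6)) X5) X7) = (addT (ivT X6) X7)" by (metis e_c_0_61 e_c_0_151)
  have e_c_0_192: "\<And>X5 X6. (addT (ivT (addT X5 oneT)) (mT (ivT (addT X5 oneT)) (addT X5 X6))) = (mT (ivT (addT X5 oneT)) X6)" by (metis e_c_0_184 e_c_0_181 e_c_0_44 e_o2t e_at e_c_0_177)
  have e_c_0_193: "\<And>X5 X6 X7. (mT (ivT (addT X5 oneT)) (addT X6 (mT (addT X5 oneT) X7))) = (addT (mT (ivT (addT X5 oneT)) (addT X6 X5)) X7)" by (metis e_c_0_69 e_c_0_64)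
  have e_c_0_194: "\<And>X5 X6. (addT X5 (d oneS (mT (ivT X6) (addT oneT X6)))) = (addT X5 (d oneS oneT))" by (metis e_c_0_185 e_c_0_186 e_c_0_60 e_c_0_187 e_c_0_84)
  have e_c_0_195: "\<And>X5 X6. (addT X5 (ivT (addT (ivT (mT X6 (addT oneT (ivT X6)))) oneT))) = (addT X5 oneT)" by (metis e_c_0_186 e_c_0_76)
  have e_c_0_196: "\<And>X5 X6. (addT (ivT (mT X5 (addT X6 (ivT X5)))) oneT) = (ivT (mT X5 (addT X6 (ivT X5))))" by (metis e_c_0_181 e_c_0_188 e_o2t)
  have e_c_0_197: "\<And>X1 X2 X5 X6. (addT (bb (sg oneT X1) X2) (addT (d X2 X5) X6)) = (addT (bb X1 X2) (addT (d X2 X5) X6))" by (metis e_at e_c_0_147)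
  have e_c_0_198: "\<And>X5 X1 X2. (sg X5 (mS X1 (sg (ivT X5) X2))) = (mS (sg X5 X1) (sg oneT X2))" by (metis e_sgmul e_c_0_189)
  have e_c_0_199: "(sg oneT oneS) = oneS" by (metis e_i2s e_c_0_190 e_o2s)
  have e_c_0_200: "\<And>X5 X6. (addT (mT (ivT (addT X5 oneT)) X5) X6) = X6" by (metis e_c_0_65 e_c_0_177)
  have e_c_0_201: "\<And>X5 X6 X7. (addT (mT (ivT (addT (mT (addT X5 oneT) X6) oneT)) X5) X7) = (addT (ivT (addT X6 oneT)) X7)" by (metis e_c_0_191 e_c_0_68)
  have e_c_0_202: "\<And>X5 X6. (addT (ivT (addT X5 oneT)) (addT (mT (ivT (addT X5 oneT)) (addT X5 X5)) X6)) = X6" by (metis e_c_0_192 e_c_0_193 e_c_0_39)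
  have e_c_0_203: "\<And>X5 X6. (addT X5 (d oneS (ivT (mT X6 (addT oneT (ivT X6)))))) = (addT X5 (d oneS oneT))" by (metis e_c_0_194 e_c_0_195 e_c_0_196 e_c_0_44 e_c_0_60 e_o2t)
  have e_c_0_204: "\<And>X1 X2 X5 X6 X7. (addT (bb (sg oneT X1) X2) (mT (addT (d X2 X5) X6) X7)) = (addT (bb X1 X2) (mT (addT (d X2 X5) X6) X7))" by (metis e_c_0_197 e_c_0_184)
  have e_c_0_205: "\<And>X5 X1. (mS (sg X5 oneS) (sg oneT X1)) = (sg oneT X1)" by (metis e_c_0_175 e_c_0_198 e_c_0_199 e_c_0_165 e_c_0_189)
  have e_c_0_206: "\<And>X5 X6 X7. (addT (mT (addT X5 oneT) (mT (ivT (addT (mT (addT X6 oneT) X5) oneT)) X6)) X7) = X7" by (metis e_c_0_200 e_c_0_201 e_c_0_181 e_c_0_44)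
  have e_c_0_207: "\<And>X5. (addT (ivT (addT (d oneS oneT) oneT)) X5) = X5" by (metis e_c_0_202 e_c_0_203 e_c_0_177 e_i2t e_c_0_156 e_dend e_c_0_200)
  have e_c_0_208: "\<And>X5 X6. (addT (mT (addT X5 oneT) (ivT (addT X6 oneT))) oneT) = (mT (addT X5 oneT) (ivT (addT X6 oneT)))" by (metis e_c_0_68 e_c_0_181)
  have e_c_0_209: "\<And>X5 X6 X7. (addT (mT X5 (mT (ivT (addT X6 oneT)) X6)) X7) = (addT X5 X7)" by (metis e_c_0_61 e_c_0_65 e_o2t)
  have e_c_0_210: "\<And>X1 X2 X5. (addT (bb (sg oneT X1) X2) X5) = (addT (bb X1 X2) X5)" by (metis e_c_0_204 e_c_0_57)
  have e_c_0_211: "\<And>X5 X1 X2 X3. (sg X5 (mS X1 (mS (sg oneT X2) X3))) = (sg X5 (mS X1 (mS X2 X3)))" by (metis e_sgmul e_c_0_153 e_ms)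
  have e_c_0_212: "\<And>X5 X1 X2. (sg X5 (addS (sg (ivT X5) X1) X2)) = (addS (sg oneT X1) (sg X5 X2))" by (metis e_sgadd e_c_0_189)
  have e_c_0_213: "\<And>X5. (sg X5 oneS) = oneS" by (metis e_c_0_205 e_c_0_162 e_c_0_199 e_o2s)
  have e_c_0_214: "\<And>X1 X5 X6 X7. (addT (d X1 X5) (addT (d X1 X6) X7)) = (addT (d X1 (addT X5 X6)) X7)" by (metis e_at e_dend)
  have e_c_0_215: "\<And>X5. (addT (d oneS oneT) X5) = X5" by (metis e_c_0_206 e_c_0_207 e_c_0_208 e_c_0_152 e_mt e_o1t e_c_0_209 e_at e_c_0_177)
  have e_c_0_216: "\<And>X1 X2 X3 X4 X5. (addT (bb (mS X1 (mS (sg oneT X2) X3)) X4) X5) = (addT (bb (mS X1 (mS X2 X3)) X4) X5)" by (metis e_c_0_210 e_c_0_211)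
  have e_c_0_217: "\<And>X1 X2. (mS (ivS (mS X1 X2)) X1) = (ivS X2)" by (metis e_c_0_182 e_c_0_121)
  have e_c_0_218: "\<And>X1 X2. (mS (ivS X1) (ivS X2)) = (ivS (mS X2 X1))" by (metis e_c_0_111 e_c_0_182)
  have e_c_0_219: "\<And>X1 X2. (ivS (mS X1 (ivS X2))) = (mS X2 (ivS X1))" by (metis e_c_0_136 e_c_0_182)
  have e_c_0_220: "\<And>X5 X1. (sg X5 (addS oneS X1)) = (addS oneS (sg X5 X1))" by (metis e_c_0_212 e_c_0_213)
  have e_c_0_222: "\<And>X5 X1 X6 X7. (addT X5 (addT (d (addS oneS X1) X6) (d X1 X7))) = (addT X5 (d X1 (addT oneT (addT X6 X7))))" by (metis e_c_0_46 e_c_0_164 e_c_0_156 e_o1t e_c_0_42)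
  have e_c_0_223: "\<And>X5 X6. (addT (d oneS (addT X5 oneT)) X6) = (addT (d oneS X5) X6)" by (metis e_c_0_214 e_c_0_215)
  have e_c_0_224: "\<And>X1 X5. (addT (bb oneS X1) X5) = X5" by (metis e_c2 e_c_0_177)
  have e_c_0_225: "\<And>X1 X2 X3 X5. (addT (bb (mS (ivS (mS (sg oneT X1) X2)) (mS X1 X2)) X3) X5) = X5" by (metis e_c_0_216 e_i1s e_c2 e_c_0_177)
  have e_c_0_226: "\<And>X5 X1. (sg X5 (ivS X1)) = (ivS (sg X5 X1))" by (metis e_c_0_135 e_i2s e_c_0_213 e_o2s)
  have e_c_0_227: "\<And>X1 X2. (ivS (mS (ivS X1) X2)) = (mS (ivS X2) X1)" by (metis e_c_0_217 e_c_0_136)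
  have e_c_0_228: "\<And>X1 X2 X3. (mS (ivS X1) (mS X2 (ivS X3))) = (ivS (mS X3 (mS (ivS X2) X1)))" by (metis e_c_0_218 e_c_0_219 e_ms)
  have e_c_0_229: "\<And>X5 X1 X2 X3 X6. (addT (bb (sg X5 (mS (ivS X1) X2)) (sg X5 (mS (ivS X1) (addS X1 X3)))) (addT (d (sg X5 (mS (ivS X1) (addS X1 X3))) (mT X5 X6)) (mT X5 (addT (bb X1 X3) (d X3 (ivT X5)))))) = (mT X5 (addT (bb X2 X3) (d X3 X6)))" by (metis e_c_0_126 e_c_0_146 e_c_0_121 e_sgadd e_c_0_145 e_c_0_147)
  have e_c_0_230: "\<And>X1 X5 X2. (sg oneT (mS X1 (addS oneS (sg X5 X2)))) = (mS (sg oneT X1) (addS oneS (sg X5 X2)))" by (metis e_c_0_176 e_c_0_220)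
  have e_c_0_232: "\<And>X1 X5 X6. (addT (d (addS oneS X1) X5) (d X1 X6)) = (d X1 (addT X5 X6))" by (metis e_c_0_222 e_c_0_177)
  have e_c_0_233: "\<And>X5 X6 X7 X8. (mT (ivT X5) (addT X6 (mT X5 (addT X7 X8)))) = (addT (mT (ivT X5) (addT X6 (mT X5 X7))) X8)" by (metis e_c_0_56 e_c_0_39 e_c_0_44)
  have e_c_0_234: "\<And>X5 X6 X1 X7. (addT (mT X5 (addT X6 (bb oneS X1))) X7) = (addT (mT X5 X6) X7)" by (metis e_c_0_56 e_c_0_66 e_c_0_46 e_c_0_57)
  have e_c_0_235: "\<And>X1 X5. (addT (d oneS (bb oneS X1)) X5) = X5" by (metis e_c_0_223 e_c_0_224 e_c_0_215)
  have e_c_0_236: "\<And>X1 X2 X3 X5. (addT (bb (ivS (mS X1 (mS (ivS (sg oneT (mS X2 X1))) X2))) X3) X5) = X5" by (metis e_c_0_225 e_c_0_217 e_c_0_226 e_c_0_227 e_ms e_c_0_228)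
  have e_c_0_237: "\<And>X1 X5 X2 X6. (addT (bb X1 (sg X5 X2)) (d (sg X5 X2) (addT X6 oneT))) = (addT (bb X1 (sg X5 X2)) (d (sg X5 X2) X6))" by (metis e_c_0_229 e_c_0_230 e_c_0_165 e_o1s e_c_0_213 e_c3 e_o1t e_c_0_156 e_c2 e_c_0_177 e_c_0_232 e_c_0_147)
  have e_c_0_238: "\<And>X5 X6 X7. (addT (mT (addT X5 X6) (addT X7 (mT (ivT (addT X5 X6)) X5))) X6) = (mT (addT X5 X6) (addT X7 oneT))" by (metis e_c_0_233 e_i1t e_c_0_44)
  have e_c_0_239: "\<And>X5 X6 X7. (mT (ivT X5) (mT (ivT X6) X7)) = (mT (ivT (mT X6 X5)) X7)" by (metis e_mt e_c_0_76)
  have e_c_0_240: "\<And>X5 X1 X6. (addT (mT X5 (d oneS (bb oneS X1))) X6) = (addT X5 X6)" by (metis e_c_0_234 e_c_0_235 e_c_0_66)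
  have e_c_0_241: "\<And>X5 X6 X7. (addT (mT X5 (ivT (addT oneT (mT (ivT (addT X6 oneT)) X6)))) X7) = (addT X5 X7)" by (metis e_c_0_234 e_c_0_79 e_o2t)
  have e_c_0_242: "\<And>X5 X1 X6. (d (sg X5 X1) (addT X6 oneT)) = (d (sg X5 X1) X6)" by (metis e_c_0_236 e_c_0_237)
  have e_c_0_243: "\<And>X5 X6 X7. (addT (mT X5 (addT X6 (mT (ivT (mT (addT X7 oneT) X5)) X7))) X5) = (mT X5 (addT X6 oneT))" by (metis e_c_0_238 e_c_0_200 e_c_0_239)
  have e_c_0_244: "\<And>X1 X5. (addT (ivT (d oneS (bb oneS X1))) X5) = X5" by (metis e_c_0_240 e_i1t e_c_0_177)
  have e_c_0_245: "\<And>X5 X6 X7. (addT (ivT (mT (addT oneT (mT (ivT (addT X5 oneT)) X5)) X6)) X7) = (addT (ivT X6) X7)" by (metis e_c_0_241 e_c_0_76)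
  have e_c_0_246: "\<And>X5. (d oneS (addT X5 oneT)) = (d oneS X5)" by (metis e_c_0_242 e_c_0_213)
  have e_c_0_247: "\<And>X5 X6. (addT (mT X5 (d oneS oneT)) X6) = (addT X5 X6)" by (metis e_c_0_241 e_c_0_207 e_c_0_156 e_o1t e_c_0_177 e_c_0_44 e_c_0_61)
  have e_c_0_248: "\<And>X1 X5 X6 X7. (mT (ivT (d X1 X5)) (addT (mT (d X1 X5) X6) (d X1 X7))) = (addT X6 (mT (ivT (d X1 X5)) (d X1 (addT X5 X7))))" by (metis e_c_0_46 e_dend)
  have e_c_0_249: "\<And>X5 X6 X1. (addT (mT X5 (addT X6 (ivT (mT (d oneS (bb oneS X1)) X5)))) X5) = (mT X5 (addT X6 oneT))" by (metis e_c_0_243 e_c_0_244 e_o1t e_c_0_76)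
  have e_c_0_250: "\<And>X1 X5 X6. (addT (ivT (mT (d oneS (bb oneS X1)) X5)) X6) = (addT (ivT X5) X6)" by (metis e_c_0_245 e_c_0_235 e_c_0_156 e_o1t e_c_0_177)
  have e_c_0_251: "\<And>X1 X5. (d X1 (addT X5 oneT)) = (d X1 X5)" by (metis e_c1 e_c_0_246)
  have e_c_0_252: "\<And>X5. (addT (ivT (d oneS oneT)) X5) = X5" by (metis e_c_0_247 e_i1t e_c_0_177)
  have e_c_0_253: "\<And>X5 X1 X6. (addT X5 (addT (ivT (d X1 X6)) (mT (ivT (d X1 X6)) (d X1 (addT X6 X6))))) = (addT X5 oneT)" by (metis e_c_0_248 e_c_0_249 e_c_0_39 e_at e_c_0_250)
  have e_c_0_254: "\<And>X1 X2 X3 X4. (d X1 (bb (ivS (mS X2 (mS (ivS (sg oneT (mS X3 X2))) X3))) X4)) = (d X1 oneT)" by (metis e_c_0_251 e_c_0_236)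
  have e_c_0_255: "\<And>X5 X6 X7. (addT (mT (ivT (addT X5 (mT (ivT (addT X6 oneT)) X6))) X5) X7) = X7" by (metis e_c_0_74 e_c_0_177)
  have e_c_0_256: "\<And>X5. (addT (d oneS (ivT (d oneS oneT))) X5) = X5" by (metis e_c_0_223 e_c_0_252 e_c_0_215)
  have e_c_0_257: "\<And>X5 X1. (addT X5 (addT (ivT (d X1 oneT)) oneT)) = (addT X5 oneT)" by (metis e_c_0_253 e_c_0_236 e_c_0_254 e_i1t)
  have e_c_0_258: "\<And>X5 X6. (addT (mT (ivT (addT X5 (d oneS (ivT (d oneS oneT))))) X5) X6) = X6" by (metis e_c_0_255 e_c_0_256 e_c_0_156 e_o1t)
  have e_c_0_259: "\<And>X1. (addT (ivT (d X1 oneT)) oneT) = oneT" by (metis e_c_0_236 e_c_0_257)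
  have e_c_0_260: "\<And>X5 X6 X7 X1 X8. (addT (mT X5 (mT X6 (addT X7 (bb oneS X1)))) X8) = (addT (mT X5 (mT X6 X7)) X8)" by (metis e_c_0_234)
  have e_c_0_261: "\<And>X5 X6 X1 X7. (addT (mT X5 (mT X6 (bb oneS X1))) X7) = (addT (mT X5 X6) X7)" by (metis e_c_0_66 e_mt)
  have e_c_0_263: "\<And>X5 X6 X7. (addT (mT X5 (mT (ivT X6) (addT X6 (d oneS (ivT (d oneS oneT)))))) X7) = (addT X5 X7)" by (metis e_c_0_241 e_c_0_258 e_c_0_156 e_o1t e_c_0_177 e_c_0_84)
  have e_c_0_264: "\<And>X1 X5. (addT (ivT (d X1 oneT)) X5) = X5" by (metis e_at e_c_0_259 e_c_0_177)
  have e_c_0_265: "\<And>X1. (d X1 (ivT (d oneS oneT))) = (d X1 oneT)" by (metis e_c_0_251 e_c_0_256 e_c1)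
  have e_c_0_266: "\<And>X5 X6 X7. (addT (mT X5 (mT X6 (d oneS oneT))) X7) = (addT (mT X5 X6) X7)" by (metis e_c_0_260 e_c_0_215 e_c_0_261)
  assume e_c_0_267: "(addT (addT (bb esk1_0 (mS esk3_0 (sg esk4_0 esk5_0))) (d (mS esk3_0 (sg esk4_0 esk5_0)) esk2_0)) (mT esk4_0 esk6_0)) \<noteq> (addT (addT (bb esk1_0 (mS esk3_0 (sg esk4_0 (addS oneS esk5_0)))) (d (mS esk3_0 (sg esk4_0 (addS oneS esk5_0))) esk2_0)) (mT esk4_0 (addT (addT (bb oneS esk5_0) (d esk5_0 oneT)) esk6_0)))"
  have e_c_0_268: "\<And>X5 X1 X6. (addT (mT X5 (d X1 oneT)) X6) = (addT X5 X6)" by (metis e_c_0_263 e_c_0_264 e_c_0_44 e_c_0_265 e_c_0_266)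
  have e_c_0_270: "\<And>X1 X5 X6 X7. (addT (d (addS oneS X1) X5) (addT (d X1 X6) X7)) = (addT (d X1 (addT X5 X6)) X7)" by (metis e_at e_c_0_232)
  have e_c_0_271: "\<And>X1 X5. (addT (d X1 oneT) X5) = X5" by (metis e_c_0_268 e_o1t e_c_0_177)
  have e_c_0_272: "(addT (bb esk1_0 (mS esk3_0 (sg esk4_0 (addS oneS esk5_0)))) (addT (d (mS esk3_0 (sg esk4_0 (addS oneS esk5_0))) esk2_0) (mT esk4_0 (addT (d esk5_0 oneT) esk6_0)))) \<noteq> (addT (bb esk1_0 (mS esk3_0 (sg esk4_0 esk5_0))) (addT (d (mS esk3_0 (sg esk4_0 esk5_0)) esk2_0) (mT esk4_0 esk6_0)))" by (metis e_c_0_267 e_at e_c2 e_kt)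
  have e_c_0_273: "\<And>X1 X2 X3. (bb X1 (mS X2 (addS oneS X3))) = (bb X1 (mS X2 X3))" by (metis e_c3 e_ks)
  have e_c_0_274: "\<And>X1 X5 X6. (addT (d (addS oneS X1) X5) X6) = (addT (d X1 X5) X6)" by (metis e_c_0_270 e_c_0_271 e_c_0_251)
  have e_c_0_275: "(addT (bb esk1_0 (mS esk3_0 (sg esk4_0 esk5_0))) (addT (d (mS esk3_0 (addS oneS (sg esk4_0 esk5_0))) esk2_0) (mT esk4_0 (addT (d esk5_0 oneT) esk6_0)))) \<noteq> (addT (bb esk1_0 (mS esk3_0 (sg esk4_0 esk5_0))) (addT (d (mS esk3_0 (sg esk4_0 esk5_0)) esk2_0) (mT esk4_0 esk6_0)))" by (metis e_c_0_272 e_c_0_220 e_c_0_273)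
  have e_c_0_276: "\<And>X1 X2 X5 X6. (addT (d (mS X1 (addS oneS X2)) X5) X6) = (addT (d (mS X1 X2) X5) X6)" by (metis e_c_0_274 e_ks)
  show False by (metis e_c_0_275 e_c_0_276 e_c_0_271)
qed

lemma mid_from:
  fixes add mult :: "'a \<Rightarrow> 'a \<Rightarrow> 'a"
  assumes m: "\<And>A B C. mult (mult A B) C = mult A (mult B C)"
  and o1: "\<And>A. mult one A = A" and o2: "\<And>A. mult A one = A"
  and i1: "\<And>A. mult (iv A) A = one" and i2: "\<And>A. mult A (iv A) = one"
  and prod: "\<And>a b. mult (lam add mult iv a b) (rho add mult iv b a) = mult a b"
  and h1: "\<And>x y z. lam add mult iv (lam add mult iv x y) (lam add mult iv (rho add mult iv y x) z) = lam add mult iv x (lam add mult iv y z)"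
  and h3: "\<And>x y z. rho add mult iv z (rho add mult iv y x) = rho add mult iv (rho add mult iv z y) (rho add mult iv (lam add mult iv y z) x)"
  shows "rho add mult iv (lam add mult iv (rho add mult iv y x) z) (lam add mult iv x y) = lam add mult iv (rho add mult iv (lam add mult iv y z) x) (rho add mult iv z y)"
proof -
  define L where "L = lam add mult iv"
  define R where "R = rho add mult iv"
  have pr: "\<And>a b. mult (L a b) (R b a) = mult a b" using prod by (simp add: L_def R_def)
  define f1 where "f1 = L (L x y) (L (R y x) z)"
  define m1 where "m1 = R (L (R y x) z) (L x y)"
  define t1 where "t1 = R z (R y x)"
  define f2 where "f2 = L x (L y z)"
  define m2 where "m2 = L (R (L y z) x) (R z y)"
  define t2 where "t2 = R (R z y) (R (L y z) x)"
  have e1: "mult (mult f1 m1) t1 = mult (mult x y) z"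
    unfolding f1_def m1_def t1_def by (metis pr m)
  have e2: "mult (mult f2 m2) t2 = mult (mult x y) z"
    unfolding f2_def m2_def t2_def by (metis pr m)
  have f: "f1 = f2" unfolding f1_def f2_def L_def R_def by (rule h1)
  have t: "t1 = t2" unfolding t1_def t2_def L_def R_def by (rule h3)
  have cancel: "\<And>a b c d. mult (mult a b) c = mult (mult a d) c \<Longrightarrow> b = d"
  proof -
    fix a b c d assume "mult (mult a b) c = mult (mult a d) c"
    then have "mult (iv a) (mult (mult (mult a b) c) (iv c)) = mult (iv a) (mult (mult (mult a d) c) (iv c))" by simp
    then show "b = d" by (metis m i1 i2 o1 o2)
  qed
  have "m1 = m2" using e1 e2 f t cancel by metis
  then show ?thesis unfolding m1_def m2_def L_def R_def .
qed

lemma sol_third: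
  assumes sol: "is_solution (assoc_map add mult iv)"
  shows "rho add mult iv z (rho add mult iv y x) = rho add mult iv (rho add mult iv z y) (rho add mult iv (lam add mult iv y z) x)"
proof -
  have "(r12 (assoc_map add mult iv) \<circ> r23 (assoc_map add mult iv) \<circ> r12 (assoc_map add mult iv)) (x,y,z) = (r23 (assoc_map add mult iv) \<circ> r12 (assoc_map add mult iv) \<circ> r23 (assoc_map add mult iv)) (x,y,z)"
    using sol unfolding is_solution_def by simp
  then show ?thesis by (simp add: r12_def r23_def assoc_map_def)
qed

lemma K_sol:
  assumes h1: "\<And>x y z. lam add mult iv (lam add mult iv x y) (lam add mult iv (rho add mult iv y x) z) = lam add mult iv x (lam add mult iv y z)"
  and h2: "\<And>x y z. rho add mult iv (lam add mult iv (rho add mult iv y x) z) (lam add mult iv x y) = lam add mult iv (rho add mult iv (lam add mult iv y z) x) (rho add mult iv z y)"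
  and h3: "\<And>x y z. rho add mult iv z (rho add mult iv y x) = rho add mult iv (rho add mult iv z y) (rho add mult iv (lam add mult iv y z) x)"
  shows "is_solution (assoc_map add mult iv)"
  unfolding is_solution_def
proof (rule ext)
  fix t :: "'a \<times> 'a \<times> 'a"
  obtain x y z where t: "t = (x,y,z)" by (cases t) auto
  show "(r12 (assoc_map add mult iv) \<circ> r23 (assoc_map add mult iv) \<circ> r12 (assoc_map add mult iv)) t = (r23 (assoc_map add mult iv) \<circ> r12 (assoc_map add mult iv) \<circ> r23 (assoc_map add mult iv)) t"
    unfolding t by (simp add: r12_def r23_def assoc_map_def, intro conjI, rule h1, rule h2, rule h3)
qed

lemma lsb_facts:
  assumes "left_semi_brace add mult one iv"
  shows "\<And>A B C. add (add A B) C = add A (add B C)"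
    and "\<And>A B C. mult (mult A B) C = mult A (mult B C)"
    and "\<And>A. mult one A = A" and "\<And>A. mult A one = A"
    and "\<And>A. mult (iv A) A = one" and "\<And>A. mult A (iv A) = one"
    and "\<And>A B C. mult A (add B C) = add (mult A B) (mult A (add (iv A) C))"
  using assms unfolding left_semi_brace_def semigroup_op_def group_ops_def by blast+

lemma lam_eq: "\<And>A B. lam add mult iv A B = mult A (add (iv A) B)"
  by (simp add: lam_def)

lemma rho_eq: "\<And>B A. rho add mult iv B A = mult (iv (add (iv A) B)) B"
  by (simp add: rho_def)

lemma lsb_sol_K:
  assumes S: "left_semi_brace add mult one iv"
    and sol: "is_solution (assoc_map add mult iv)"
  shows "add x (mult b c) = add x (mult b (add one c))"
  by (rule sol_K_core[where add=add and mult=mult and one=one and iv=iv and lam="lam add mult iv" and rho="rho add mult iv", OF lsb_facts[OF S] lam_eq rho_eq sol_third[OF sol]])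

lemma lsb_K_sol:
  assumes S: "left_semi_brace add mult one iv"
    and K: "\<And>x b c. add x (mult b c) = add x (mult b (add one c))"
  shows "is_solution (assoc_map add mult iv)"
proof -
  note F = lsb_facts[OF S]
  have h1: "\<And>x y z. lam add mult iv (lam add mult iv x y) (lam add mult iv (rho add mult iv y x) z) = lam add mult iv x (lam add mult iv y z)"
    by (rule K_first[where add=add and mult=mult and one=one and iv=iv and lam="lam add mult iv" and rho="rho add mult iv", OF F lam_eq rho_eq K])
  have h3: "\<And>x y z. rho add mult iv z (rho add mult iv y x) = rho add mult iv (rho add mult iv z y) (rho add mult iv (lam add mult iv y z) x)"
    by (rule K_third[where add=add and mult=mult and one=one and iv=iv and lam="lam add mult iv" and rho="rho add mult iv", OF F lam_eq rho_eq K])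
  have prod: "\<And>a b. mult (lam add mult iv a b) (rho add mult iv b a) = mult a b"
  proof -
    fix a b
    have "mult (mult a (add (iv a) b)) (mult (iv (add (iv a) b)) b) = mult a (mult (mult (add (iv a) b) (iv (add (iv a) b))) b)"
      by (simp only: F(2))
    also have "\<dots> = mult a b" by (simp only: F(6) F(3))
    finally show "mult (lam add mult iv a b) (rho add mult iv b a) = mult a b" unfolding lam_def rho_def .
  qed
  have h2: "\<And>x y z. rho add mult iv (lam add mult iv (rho add mult iv y x) z) (lam add mult iv x y) = lam add mult iv (rho add mult iv (lam add mult iv y z) x) (rho add mult iv z y)"
    by (rule mid_from[where add=add and mult=mult and one=one and iv=iv, OF F(2) F(3) F(4) F(5) F(6) prod h1 h3])
  show ?thesis by (rule K_sol[where add=add and mult=mult and iv=iv, OF h1 h2 h3])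
qed

theorem theorem55:
  fixes addS multS :: "'a \<Rightarrow> 'a \<Rightarrow> 'a" and oneS :: 'a and invS :: "'a \<Rightarrow> 'a"
    and addT multT :: "'b \<Rightarrow> 'b \<Rightarrow> 'b" and oneT :: 'b and invT :: "'b \<Rightarrow> 'b"
    and sigma :: "'b \<Rightarrow> 'a \<Rightarrow> 'a" and delta :: "'a \<Rightarrow> 'b \<Rightarrow> 'b" and bb :: "'a \<Rightarrow> 'a \<Rightarrow> 'b"
  assumes S: "left_semi_brace addS multS oneS invS"
    and T: "left_semi_brace addT multT oneT invT"
    and solS: "is_solution (assoc_map addS multS invS)"
    and solT: "is_solution (assoc_map addT multT invT)"
    and sigma_aut: "\<forall>u. is_aut addS multS (sigma u)"
    and sigma_hom: "\<forall>u v. sigma (multT u v) = sigma u \<circ> sigma v"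
    and delta_end: "\<forall>a u v. delta a (addT u v) = addT (delta a u) (delta a v)"
    and cocycle: "delta_cocycle addS addT delta bb"
    and compat: "\<forall>a b c u v.
       addT (addT (bb (multS a (sigma u b)) (lam addS multS invS a (sigma u c)))
                  (delta (lam addS multS invS a (sigma u c)) (multT u v)))
            (multT u (addT (bb (sigma (invT u) (invS a)) c) (delta c (invT u))))
       = multT u (addT (bb b c) (delta c v))"
    and cond1: "\<forall>a u. delta a (delta oneS u) = delta a u"
    and cond2: "\<forall>a u. addT (bb oneS a) u = addT oneT u"
    and cond3: "\<forall>a b. bb a (addS oneS b) = bb a b"
  shows "is_solution (assoc_map (asym_add addS addT delta bb) (asym_mult multS multT sigma)
                                (asym_inv invS invT sigma))"
proof -
  note FS = lsb_facts[OF S]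
  note FT = lsb_facts[OF T]
  have KS: "\<And>x b c. addS x (multS b c) = addS x (multS b (addS oneS c))"
    by (rule lsb_sol_K[OF S solS])
  have KT: "\<And>x b c. addT x (multT b c) = addT x (multT b (addT oneT c))"
    by (rule lsb_sol_K[OF T solT])
  have sgadd: "\<And>U A B. sigma U (addS A B) = addS (sigma U A) (sigma U B)"
    using sigma_aut by (simp add: is_aut_def)
  have sgmul: "\<And>U A B. sigma U (multS A B) = multS (sigma U A) (sigma U B)"
    using sigma_aut by (simp add: is_aut_def)
  have sgbij: "\<And>U. bij (sigma U)"
    using sigma_aut by (simp add: is_aut_def)
  have sghom: "\<And>U V A. sigma (multT U V) A = sigma U (sigma V A)"
    using sigma_hom by simp
  have dend: "\<And>A U V. delta A (addT U V) = addT (delta A U) (delta A V)"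
    using delta_end by simp
  have coc: "\<And>A B C U V. addT (addT (addT (bb (addS A B) C) (delta C (bb A B))) (delta C (delta B U))) (delta C V) = addT (addT (addT (bb A (addS B C)) (delta (addS B C) U)) (bb B C)) (delta C V)"
    using cocycle by (simp add: delta_cocycle_def)
  have comp: "\<And>A B C U V. addT (addT (bb (multS A (sigma U B)) (multS A (addS (invS A) (sigma U C)))) (delta (multS A (addS (invS A) (sigma U C))) (multT U V))) (multT U (addT (bb (sigma (invT U) (invS A)) C) (delta C (invT U)))) = multT U (addT (bb B C) (delta C V))"
    using compat by (simp add: lam_def)
  have c1: "\<And>A U. delta A (delta oneS U) = delta A U" using cond1 by simp
  have c2: "\<And>A U. addT (bb oneS A) U = addT oneT U" using cond2 by simp
  have c3: "\<And>A B. bb A (addS oneS B) = bb A B" using cond3 by simp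
  have sg1: "\<And>U. sigma U oneS = oneS"
  proof -
    fix U
    have "sigma U oneS = multS (sigma U oneS) (sigma U oneS)" by (metis sgmul FS(3))
    then have "multS (invS (sigma U oneS)) (sigma U oneS) = multS (invS (sigma U oneS)) (multS (sigma U oneS) (sigma U oneS))" by simp
    then show "sigma U oneS = oneS" by (metis FS(2) FS(3) FS(5))
  qed
  have sgone: "\<And>A. sigma oneT A = A"
  proof -
    fix A
    have "sigma oneT (sigma oneT A) = sigma oneT A" using sghom[of oneT oneT A] FT(3) by simp
    moreover have "inj (sigma oneT)" using sgbij bij_is_inj by blast
    ultimately show "sigma oneT A = A" by (simp add: inj_eq)
  qed
  have sginv: "\<And>U A. sigma U (invS A) = invS (sigma U A)"
  proof -
    fix U A
    have "multS (sigma U (invS A)) (sigma U A) = oneS" by (metis sgmul FS(5) sg1)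
    then show "sigma U (invS A) = invS (sigma U A)" by (metis FS(2) FS(4) FS(6))
  qed
  let ?addB = "asym_add addS addT delta bb"
  let ?multB = "asym_mult multS multT sigma"
  let ?invB = "asym_inv invS invT sigma"
  let ?oneB = "(oneS, oneT)"
  have assocB: "semigroup_op ?addB"
    unfolding semigroup_op_def
  proof (intro allI)
    fix X Y Z :: "'a \<times> 'b"
    obtain a u where X: "X = (a,u)" by (cases X) auto
    obtain b v where Y: "Y = (b,v)" by (cases Y) auto
    obtain c w where Z: "Z = (c,w)" by (cases Z) auto
    have "addT (addT (addT (addT (bb (addS a b) c) (delta c (bb a b))) (delta c (delta b u))) (delta c v)) w
        = addT (addT (addT (addT (bb a (addS b c)) (delta (addS b c) u)) (bb b c)) (delta c v)) w"
      by (simp only: coc)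
    then show "?addB (?addB X Y) Z = ?addB X (?addB Y Z)"
      unfolding X Y Z asym_add_def by (simp add: FS(1) FT(1) dend)
  qed
  have groupB: "group_ops ?multB ?oneB ?invB"
    unfolding group_ops_def
  proof (intro conjI allI)
    fix X Y Z :: "'a \<times> 'b"
    obtain a u where X: "X = (a,u)" by (cases X) auto
    obtain b v where Y: "Y = (b,v)" by (cases Y) auto
    obtain c w where Z: "Z = (c,w)" by (cases Z) auto
    show "?multB (?multB X Y) Z = ?multB X (?multB Y Z)"
      unfolding X Y Z asym_mult_def by (simp add: FS(2) FT(2) sghom sgmul)
  next
    fix X :: "'a \<times> 'b"
    obtain a u where X: "X = (a,u)" by (cases X) auto
    show "?multB ?oneB X = X" unfolding X asym_mult_def by (simp add: FS(3) FT(3) sgone)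
    show "?multB X ?oneB = X" unfolding X asym_mult_def by (simp add: FS(4) FT(4) sg1)
    show "?multB (?invB X) X = ?oneB"
      unfolding X asym_mult_def asym_inv_def by (simp add: FS(5) FT(5) sgmul[symmetric] sg1)
    have "sigma u (sigma (invT u) (invS a)) = invS a"
      using sghom[of u "invT u" "invS a"] FT(6) sgone by simp
    then show "?multB X (?invB X) = ?oneB"
      unfolding X asym_mult_def asym_inv_def by (simp add: FS(6) FT(6))
  qed
  have sbB: "\<And>X Y Z. ?multB X (?addB Y Z) = ?addB (?multB X Y) (?multB X (?addB (?invB X) Z))"
  proof -
    fix X Y Z :: "'a \<times> 'b"
    obtain a u where X: "X = (a,u)" by (cases X) auto
    obtain b v where Y: "Y = (b,v)" by (cases Y) auto
    obtain c w where Z: "Z = (c,w)" by (cases Z) auto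
    have s1: "multS a (sigma u (addS (sigma (invT u) (invS a)) c)) = multS a (addS (invS a) (sigma u c))"
    proof -
      have "sigma u (sigma (invT u) (invS a)) = invS a"
        using sghom[of u "invT u" "invS a"] FT(6) sgone by simp
      then show ?thesis by (simp add: sgadd)
    qed
    have sS: "multS a (sigma u (addS b c)) = addS (multS a (sigma u b)) (multS a (addS (invS a) (sigma u c)))"
      unfolding sgadd by (rule FS(7))
    let ?L = "multS a (addS (invS a) (sigma u c))"
    have tT: "multT u (addT (addT (bb b c) (delta c v)) w)
      = addT (addT (bb (multS a (sigma u b)) ?L) (delta ?L (multT u v)))
             (multT u (addT (addT (bb (sigma (invT u) (invS a)) c) (delta c (invT u))) w))"
    proof -
      have "multT u (addT (addT (bb b c) (delta c v)) w) = addT (multT u (addT (bb b c) (delta c v))) (multT u (addT (invT u) w))"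
        by (rule FT(7))
      also have "\<dots> = addT (addT (addT (bb (multS a (sigma u b)) ?L) (delta ?L (multT u v))) (multT u (addT (bb (sigma (invT u) (invS a)) c) (delta c (invT u))))) (multT u (addT (invT u) w))"
        by (simp only: comp)
      also have "\<dots> = addT (addT (bb (multS a (sigma u b)) ?L) (delta ?L (multT u v))) (addT (multT u (addT (bb (sigma (invT u) (invS a)) c) (delta c (invT u)))) (multT u (addT (invT u) w)))"
        by (simp only: FT(1))
      also have "\<dots> = addT (addT (bb (multS a (sigma u b)) ?L) (delta ?L (multT u v))) (multT u (addT (addT (bb (sigma (invT u) (invS a)) c) (delta c (invT u))) w))"
        by (simp only: FT(7)[symmetric])
      finally show ?thesis .
    qed
    show "?multB X (?addB Y Z) = ?addB (?multB X Y) (?multB X (?addB (?invB X) Z))"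
      unfolding X Y Z asym_mult_def asym_add_def asym_inv_def
      using sS tT s1 by simp
  qed
  have LSB: "left_semi_brace ?addB ?multB ?oneB ?invB"
    unfolding left_semi_brace_def using assocB groupB sbB by blast
  have KB: "\<And>X Y Z. ?addB X (?multB Y Z) = ?addB X (?multB Y (?addB ?oneB Z))"
  proof -
    fix X Y Z :: "'a \<times> 'b"
    obtain x u where X: "X = (x,u)" by (cases X) auto
    obtain b v where Y: "Y = (b,v)" by (cases Y) auto
    obtain c w where Z: "Z = (c,w)" by (cases Z) auto
    have s: "addS x (multS b (sigma v c)) = addS x (multS b (sigma v (addS oneS c)))"
      by (simp add: sgadd sg1 KS[symmetric])
    have t: "addT (addT (bb x (multS b (sigma v c))) (delta (multS b (sigma v c)) u)) (multT v w) = addT (addT (bb x (multS b (sigma v (addS oneS c)))) (delta (multS b (sigma v (addS oneS c))) u)) (multT v (addT (addT (bb oneS c) (delta c oneT)) w))"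
      by (rule KB_T_core[OF FS(1) FS(2) FS(3) FS(4) FS(5) FS(6) FS(7) KS FT(1) FT(2) FT(3) FT(4) FT(5) FT(6) FT(7) KT sgadd sgmul sghom dend coc comp c1 c2 c3])
    show "?addB X (?multB Y Z) = ?addB X (?multB Y (?addB ?oneB Z))"
      unfolding X Y Z asym_mult_def asym_add_def using s t by simp
  qed
  show ?thesis by (rule lsb_K_sol[OF LSB KB])
qed

end
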